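(* Let $q$ be a power of a prime $p$ and let $X=\{F=0\}\subset\mathbb{P}^n$ be a Frobenius nonclassical hypersurface of degree $d$ over $\mathbb{F}_q$. Assume there exists a line $L\subset\mathbb{P}^n$ defined over $\mathbb{F}_q$ with $L\not\subset X$ such that the intersection $X\cap L$ is not a $p$-th power (i.e. the binary form $F|_L$ is not a $p$-th power). Then $X\cap L$ contains at least one $\mathbb{F}_q$-point, and the intersection multiplicity of $X$ and $L$ at every point of $X\cap L$ not defined over $\mathbb{F}_q$ is divisible by $p$.
   Context: $X$ is Frobenius nonclassical if $F$ divides $\sum_{i=0}^n x_i^q\frac{\partial F}{\partial x_i}$. *)

theory Defs
  imports "HOL-Library.Poly_Mapping" "HOL-Library.Cardinality" "HOL-Algebra.Algebraic_Closure_Type"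
begin

text \<open>Multivariate polynomials in the variables x_0, x_1, ... over a ring 'a,
  represented as finitely supported maps from exponent vectors (finitely supported
  maps nat to nat) to coefficients.  Multiplication is the convolution product
  provided by the library, so mpoly is a commutative ring and dvd is divisibility
  in the polynomial ring.\<close>

type_synonym 'a mpoly = "(nat \<Rightarrow>\<^sub>0 nat) \<Rightarrow>\<^sub>0 'a"

definition mp_monom :: "(nat \<Rightarrow>\<^sub>0 nat) \<Rightarrow> 'a::zero \<Rightarrow> 'a mpoly" where
  "mp_monom \<alpha> c = Poly_Mapping.single \<alpha> c"

definition mp_const :: "'a::zero \<Rightarrow> 'a mpoly" where
  "mp_const c = mp_monom 0 c"

definition mp_var :: "nat \<Rightarrow> 'a::{zero,one} mpoly" where
  "mp_var i = mp_monom (Poly_Mapping.single i 1) 1"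

definition mp_eval :: "'a::comm_ring_1 mpoly \<Rightarrow> (nat \<Rightarrow> 'a) \<Rightarrow> 'a" where
  "mp_eval F x = (\<Sum>\<alpha>\<in>Poly_Mapping.keys F. Poly_Mapping.lookup F \<alpha> * (\<Prod>i\<in>Poly_Mapping.keys \<alpha>. x i ^ Poly_Mapping.lookup \<alpha> i))"

definition mp_subst :: "'a::comm_ring_1 mpoly \<Rightarrow> (nat \<Rightarrow> 'a mpoly) \<Rightarrow> 'a mpoly" where
  "mp_subst F l = (\<Sum>\<alpha>\<in>Poly_Mapping.keys F. mp_const (Poly_Mapping.lookup F \<alpha>) * (\<Prod>i\<in>Poly_Mapping.keys \<alpha>. l i ^ Poly_Mapping.lookup \<alpha> i))"

definition mp_pderiv :: "nat \<Rightarrow> 'a::comm_ring_1 mpoly \<Rightarrow> 'a mpoly" where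
  "mp_pderiv i F = (\<Sum>\<alpha>\<in>Poly_Mapping.keys F.
      mp_monom (\<alpha> - Poly_Mapping.single i 1) (of_nat (Poly_Mapping.lookup \<alpha> i) * Poly_Mapping.lookup F \<alpha>))"

definition mp_map :: "('a::zero \<Rightarrow> 'b::zero) \<Rightarrow> 'a mpoly \<Rightarrow> 'b mpoly" where
  "mp_map f F = Poly_Mapping.map f F"

definition is_form :: "nat \<Rightarrow> nat \<Rightarrow> 'a::zero mpoly \<Rightarrow> bool" where
  "is_form n d F \<longleftrightarrow> (\<forall>\<alpha>\<in>Poly_Mapping.keys F. (\<forall>i\<in>Poly_Mapping.keys \<alpha>. i \<le> n) \<and> (\<Sum>i\<in>Poly_Mapping.keys \<alpha>. Poly_Mapping.lookup \<alpha> i) = d)"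

definition frobenius_nonclassical :: "nat \<Rightarrow> nat \<Rightarrow> 'a::comm_ring_1 mpoly \<Rightarrow> bool" where
  "frobenius_nonclassical n q F \<longleftrightarrow> F dvd (\<Sum>i\<le>n. mp_var i ^ q * mp_pderiv i F)"

text \<open>Restriction of F to the line spanned by the points P and Q:
  the binary form G(s,t) = F(s P + t Q) in the variables s = x_0, t = x_1.\<close>
definition restrict_line :: "'a::comm_ring_1 mpoly \<Rightarrow> (nat \<Rightarrow> 'a) \<Rightarrow> (nat \<Rightarrow> 'a) \<Rightarrow> 'a mpoly" where
  "restrict_line F P Q = mp_subst F (\<lambda>i. mp_const (P i) * mp_var 0 + mp_const (Q i) * mp_var 1)"

text \<open>Multiplicity of the point (s:t) of P^1 as a root of a (nonzero) binary form G
  in the variables x_0, x_1: the largest m with (t x_0 - s x_1)^m dividing G.\<close>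
definition binform_mult :: "'a::comm_ring_1 mpoly \<Rightarrow> 'a \<Rightarrow> 'a \<Rightarrow> nat" where
  "binform_mult G s t = (GREATEST m. (mp_const t * mp_var 0 - mp_const s * mp_var 1) ^ m dvd G)"

text \<open>Intersection multiplicity of X = {F = 0} and the line L = span(P,Q) at the
  point s P + t Q (coordinates in the algebraic closure).\<close>
definition int_mult :: "'a::field mpoly \<Rightarrow> (nat \<Rightarrow> 'a) \<Rightarrow> (nat \<Rightarrow> 'a) \<Rightarrow>
    'a alg_closure \<Rightarrow> 'a alg_closure \<Rightarrow> nat" where
  "int_mult F P Q s t = binform_mult (mp_map to_ac (restrict_line F P Q)) s t"

end

theory Submission
  imports Defs "HOL-Computational_Algebra.Polynomial" "HOL-Computational_Algebra.Primes"
begin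


lemma mp_var_def': "mp_var i = Poly_Mapping.single (Poly_Mapping.single i 1) 1"
  by (simp add: mp_var_def mp_monom_def)
lemma mp_const_def': "mp_const c = Poly_Mapping.single 0 c"
  by (simp add: mp_const_def mp_monom_def)

lemma lookup_map0: "g 0 = 0 \<Longrightarrow> Poly_Mapping.lookup (Poly_Mapping.map g f) k = g (Poly_Mapping.lookup f k)"
  by transfer (simp add: when_def)

lemma pm_expand:
  "(A::'k \<Rightarrow>\<^sub>0 'b::comm_monoid_add) = (\<Sum>\<alpha>\<in>Poly_Mapping.keys A. Poly_Mapping.single \<alpha> (Poly_Mapping.lookup A \<alpha>))"
proof (rule poly_mapping_eqI)
  fix k
  show "Poly_Mapping.lookup A k = Poly_Mapping.lookup (\<Sum>\<alpha>\<in>Poly_Mapping.keys A. Poly_Mapping.single \<alpha> (Poly_Mapping.lookup A \<alpha>)) k"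
    by (cases "k \<in> Poly_Mapping.keys A") (auto simp: lookup_sum lookup_single when_def in_keys_iff)
qed

lemma sum_keys_superset:
  assumes "finite S" "Poly_Mapping.keys A \<subseteq> S" "\<And>\<alpha>. f \<alpha> 0 = 0"
  shows "(\<Sum>\<alpha>\<in>S. f \<alpha> (Poly_Mapping.lookup A \<alpha>)) = (\<Sum>\<alpha>\<in>Poly_Mapping.keys A. f \<alpha> (Poly_Mapping.lookup A \<alpha>))"
  by (rule sum.mono_neutral_right) (use assms in \<open>auto simp: in_keys_iff\<close>)

lemma additive_zero:
  fixes h :: "'b::monoid_add \<Rightarrow> 'c::cancel_comm_monoid_add"
  assumes "\<And>x y. h (x+y) = h x + h y"
  shows "h 0 = 0"
  using assms[of 0 0] by simp

lemma additive_sum: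
  fixes h :: "'b::comm_monoid_add \<Rightarrow> 'c::cancel_comm_monoid_add"
  assumes "\<And>x y. h (x+y) = h x + h y"
  shows "h (sum f S) = (\<Sum>s\<in>S. h (f s))"
  by (induction S rule: infinite_finite_induct) (auto simp: assms additive_zero[OF assms])

lemma linear_eq:
  fixes \<Phi> \<Psi> :: "('k \<Rightarrow>\<^sub>0 'b::comm_monoid_add) \<Rightarrow> 'c::cancel_comm_monoid_add"
  assumes "\<And>A B. \<Phi> (A+B) = \<Phi> A + \<Phi> B" "\<And>A B. \<Psi> (A+B) = \<Psi> A + \<Psi> B"
    and "\<And>\<alpha> a. \<Phi> (Poly_Mapping.single \<alpha> a) = \<Psi> (Poly_Mapping.single \<alpha> a)"
  shows "\<Phi> A = \<Psi> A"
proof -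
  have "\<Phi> A = \<Phi> (\<Sum>\<alpha>\<in>Poly_Mapping.keys A. Poly_Mapping.single \<alpha> (Poly_Mapping.lookup A \<alpha>))"
    by (subst pm_expand) rule
  also have "\<dots> = (\<Sum>\<alpha>\<in>Poly_Mapping.keys A. \<Phi> (Poly_Mapping.single \<alpha> (Poly_Mapping.lookup A \<alpha>)))"
    by (rule additive_sum) (rule assms(1))
  also have "\<dots> = (\<Sum>\<alpha>\<in>Poly_Mapping.keys A. \<Psi> (Poly_Mapping.single \<alpha> (Poly_Mapping.lookup A \<alpha>)))"
    using assms(3) by simp
  also have "\<dots> = \<Psi> (\<Sum>\<alpha>\<in>Poly_Mapping.keys A. Poly_Mapping.single \<alpha> (Poly_Mapping.lookup A \<alpha>))"
    by (rule additive_sum[symmetric]) (rule assms(2))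
  also have "\<dots> = \<Psi> A" by (subst (2) pm_expand) rule
  finally show ?thesis .
qed

lemma bilinear_eq:
  fixes \<Phi> \<Psi> :: "('k \<Rightarrow>\<^sub>0 'b::comm_monoid_add) \<Rightarrow> ('k \<Rightarrow>\<^sub>0 'b) \<Rightarrow> 'c::cancel_comm_monoid_add"
  assumes "\<And>A1 A2 B. \<Phi> (A1+A2) B = \<Phi> A1 B + \<Phi> A2 B" "\<And>A B1 B2. \<Phi> A (B1+B2) = \<Phi> A B1 + \<Phi> A B2"
    and "\<And>A1 A2 B. \<Psi> (A1+A2) B = \<Psi> A1 B + \<Psi> A2 B" "\<And>A B1 B2. \<Psi> A (B1+B2) = \<Psi> A B1 + \<Psi> A B2"
    and "\<And>\<alpha> a \<beta> b. \<Phi> (Poly_Mapping.single \<alpha> a) (Poly_Mapping.single \<beta> b) = \<Psi> (Poly_Mapping.single \<alpha> a) (Poly_Mapping.single \<beta> b)"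
  shows "\<Phi> A B = \<Psi> A B"
proof -
  have *: "\<Phi> (Poly_Mapping.single \<alpha> a) B = \<Psi> (Poly_Mapping.single \<alpha> a) B" for \<alpha> a
  proof (rule linear_eq[where \<Phi>="\<Phi> (Poly_Mapping.single \<alpha> a)" and \<Psi>="\<Psi> (Poly_Mapping.single \<alpha> a)"])
    show "\<Phi> (Poly_Mapping.single \<alpha> a) (B1 + B2) = \<Phi> (Poly_Mapping.single \<alpha> a) B1 + \<Phi> (Poly_Mapping.single \<alpha> a) B2" for B1 B2
      by (rule assms(2))
    show "\<Psi> (Poly_Mapping.single \<alpha> a) (B1 + B2) = \<Psi> (Poly_Mapping.single \<alpha> a) B1 + \<Psi> (Poly_Mapping.single \<alpha> a) B2" for B1 B2
      by (rule assms(4))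
    show "\<Phi> (Poly_Mapping.single \<alpha> a) (Poly_Mapping.single \<beta> b) = \<Psi> (Poly_Mapping.single \<alpha> a) (Poly_Mapping.single \<beta> b)" for \<beta> b
      by (rule assms(5))
  qed
  show ?thesis
  proof (rule linear_eq[where \<Phi>="\<lambda>A. \<Phi> A B" and \<Psi>="\<lambda>A. \<Psi> A B"])
    show "\<Phi> (A1 + A2) B = \<Phi> A1 B + \<Phi> A2 B" for A1 A2 by (rule assms(1))
    show "\<Psi> (A1 + A2) B = \<Psi> A1 B + \<Psi> A2 B" for A1 A2 by (rule assms(3))
    show "\<Phi> (Poly_Mapping.single \<alpha> a) B = \<Psi> (Poly_Mapping.single \<alpha> a) B" for \<alpha> a by (rule *)
  qed
qed

definition mon :: "(nat \<Rightarrow>\<^sub>0 nat) \<Rightarrow> (nat \<Rightarrow> 'a::comm_semiring_1) \<Rightarrow> 'a" where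
  "mon \<alpha> x = (\<Prod>i\<in>Poly_Mapping.keys \<alpha>. x i ^ Poly_Mapping.lookup \<alpha> i)"

lemma mon_superset:
  assumes "finite S" "Poly_Mapping.keys \<alpha> \<subseteq> S"
  shows "(\<Prod>i\<in>S. x i ^ Poly_Mapping.lookup \<alpha> i) = mon \<alpha> x"
  unfolding mon_def by (rule prod.mono_neutral_right) (use assms in \<open>auto simp: in_keys_iff\<close>)

lemma mon_add: "mon (\<alpha> + \<beta>) x = mon \<alpha> x * mon \<beta> x"
proof -
  let ?S = "Poly_Mapping.keys \<alpha> \<union> Poly_Mapping.keys \<beta>"
  have "mon (\<alpha> + \<beta>) x = (\<Prod>i\<in>?S. x i ^ Poly_Mapping.lookup (\<alpha>+\<beta>) i)"
    by (rule mon_superset[symmetric]) (auto dest: keys_add[THEN subsetD])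
  also have "\<dots> = (\<Prod>i\<in>?S. x i ^ Poly_Mapping.lookup \<alpha> i) * (\<Prod>i\<in>?S. x i ^ Poly_Mapping.lookup \<beta> i)"
    by (simp add: lookup_add power_add prod.distrib)
  also have "\<dots> = mon \<alpha> x * mon \<beta> x"
    by (simp add: mon_superset)
  finally show ?thesis .
qed

lemma mon_zero [simp]: "mon 0 x = 1" by (simp add: mon_def)
lemma mon_single [simp]: "mon (Poly_Mapping.single i k) x = x i ^ k"
  by (simp add: mon_def)

lemma mp_eval_mon: "mp_eval F x = (\<Sum>\<alpha>\<in>Poly_Mapping.keys F. Poly_Mapping.lookup F \<alpha> * mon \<alpha> x)"
  by (simp add: mp_eval_def mon_def)

lemma mp_eval_add: "mp_eval (A + B) x = mp_eval A x + mp_eval B x"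
proof -
  let ?S = "Poly_Mapping.keys A \<union> Poly_Mapping.keys B"
  have "mp_eval (A + B) x = (\<Sum>\<alpha>\<in>?S. Poly_Mapping.lookup (A+B) \<alpha> * mon \<alpha> x)"
    unfolding mp_eval_mon
    by (rule sum_keys_superset[symmetric, where f="\<lambda>\<alpha> c. c * mon \<alpha> x"]) (auto dest: keys_add[THEN subsetD])
  also have "\<dots> = (\<Sum>\<alpha>\<in>?S. Poly_Mapping.lookup A \<alpha> * mon \<alpha> x) + (\<Sum>\<alpha>\<in>?S. Poly_Mapping.lookup B \<alpha> * mon \<alpha> x)"
    by (simp add: lookup_add distrib_right sum.distrib)
  also have "\<dots> = mp_eval A x + mp_eval B x"
    unfolding mp_eval_mon
    by (subst (1 2) sum_keys_superset[where f="\<lambda>\<alpha> c. c * mon \<alpha> x"]) auto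
  finally show ?thesis .
qed

lemma mp_eval_single [simp]: "mp_eval (Poly_Mapping.single \<alpha> c) x = c * mon \<alpha> x"
  by (simp add: mp_eval_mon)

lemma mp_eval_mult: "mp_eval (A * B) x = mp_eval A x * mp_eval B x"
  by (rule bilinear_eq[where \<Phi>="\<lambda>A B. mp_eval (A * B) x" and \<Psi>="\<lambda>A B. mp_eval A x * mp_eval B x"])
     (simp_all add: mp_eval_add distrib_left distrib_right mult_single mon_add)

lemma mp_eval_zero [simp]: "mp_eval 0 x = 0" by (simp add: mp_eval_def)
lemma mp_eval_one [simp]: "mp_eval 1 x = 1"
  by (metis mon_zero mp_eval_single mult_1 single_one)
lemma mp_eval_const [simp]: "mp_eval (mp_const c) x = c" by (simp add: mp_const_def')
lemma mp_eval_var [simp]: "mp_eval (mp_var i) x = x i" by (simp add: mp_var_def')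

lemma mp_eval_uminus: "mp_eval (- A) x = - mp_eval A x"
  by (metis add_eq_0_iff2 mp_eval_add mp_eval_zero right_minus)
lemma mp_eval_diff: "mp_eval (A - B) x = mp_eval A x - mp_eval B x"
  by (metis diff_conv_add_uminus mp_eval_add mp_eval_uminus)
lemma mp_eval_power: "mp_eval (A ^ n) x = mp_eval A x ^ n"
  by (induction n) (auto simp: mp_eval_mult)
lemma mp_eval_sum: "mp_eval (sum f S) x = (\<Sum>s\<in>S. mp_eval (f s) x)"
  by (rule additive_sum) (rule mp_eval_add)
lemma mp_eval_prod: "mp_eval (prod f S) x = (\<Prod>s\<in>S. mp_eval (f s) x)"
  by (induction S rule: infinite_finite_induct) (auto simp: mp_eval_mult)
lemma mp_eval_of_nat [simp]: "mp_eval (of_nat n) x = of_nat n"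
  by (induction n) (auto simp: mp_eval_add)

lemmas mp_eval_simps = mp_eval_add mp_eval_mult mp_eval_uminus mp_eval_diff mp_eval_power mp_eval_sum mp_eval_prod



lemma lookup_mp_map: "g 0 = 0 \<Longrightarrow> Poly_Mapping.lookup (mp_map g A) \<alpha> = g (Poly_Mapping.lookup A \<alpha>)"
  unfolding mp_map_def by (rule lookup_map0)

lemma mp_map_add:
  assumes "g 0 = 0" "\<And>a b. g (a+b) = g a + g b"
  shows "mp_map g (A+B) = mp_map g A + mp_map g B"
  by (rule poly_mapping_eqI) (simp add: lookup_mp_map assms lookup_add)

lemma mp_map_single: "g 0 = 0 \<Longrightarrow> mp_map g (Poly_Mapping.single \<alpha> c) = Poly_Mapping.single \<alpha> (g c)"
  unfolding mp_map_def by simp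

lemma mp_map_mult:
  fixes g :: "'a::comm_ring_1 \<Rightarrow> 'b::comm_ring_1"
  assumes "g 0 = 0" "\<And>a b. g (a+b) = g a + g b" "\<And>a b. g (a*b) = g a * g b"
  shows "mp_map g (A*B) = mp_map g A * mp_map g B"
  by (rule bilinear_eq[where \<Phi>="\<lambda>A B. mp_map g (A*B)" and \<Psi>="\<lambda>A B. mp_map g A * mp_map g B"])
     (simp_all add: mp_map_add[OF assms(1,2)] distrib_left distrib_right mult_single mp_map_single assms)

lemma mp_const_add: "mp_const (a + b) = mp_const a + mp_const b"
  by (simp add: mp_const_def' single_add)
lemma mp_const_mult: "mp_const ((a::'a::comm_ring_1) * b) = mp_const a * mp_const b"
  by (simp add: mp_const_def' mult_single)
lemma mp_const_0 [simp]: "mp_const 0 = 0" by (simp add: mp_const_def')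
lemma mp_const_1 [simp]: "mp_const 1 = 1" by (simp add: mp_const_def')
lemma mp_const_eq_0_iff [simp]: "mp_const c = 0 \<longleftrightarrow> c = 0"
  by (metis mp_const_def' lookup_single_eq lookup_zero single_zero)
lemma mp_const_uminus: "mp_const (- a) = - mp_const a" by (simp add: mp_const_def' single_uminus)
lemma mp_const_diff: "mp_const (a - b) = mp_const a - mp_const b" by (simp add: mp_const_def' single_diff)
lemma mp_const_power: "mp_const ((a::'a::comm_ring_1) ^ n) = mp_const a ^ n"
  by (induction n) (simp_all add: mp_const_mult)
lemma mp_const_of_nat: "mp_const (of_nat n) = of_nat n" by (simp add: mp_const_def')

lemma keys_map_const: "Poly_Mapping.keys (mp_map mp_const F) = Poly_Mapping.keys F"
  by (auto simp: in_keys_iff lookup_mp_map)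

lemma mp_subst_eval: "mp_subst F l = mp_eval (mp_map mp_const F) l"
  unfolding mp_subst_def mp_eval_def keys_map_const
  by (simp add: lookup_mp_map)

lemma mp_subst_add: "mp_subst (A + B) l = mp_subst A l + mp_subst B l"
  by (simp add: mp_subst_eval mp_map_add mp_const_add mp_eval_add)
lemma mp_subst_mult: "mp_subst (A * B) l = mp_subst A l * mp_subst B l"
  by (simp add: mp_subst_eval mp_map_mult mp_const_add mp_const_mult mp_eval_mult)
lemma mp_subst_single: "mp_subst (Poly_Mapping.single \<alpha> c) l = mp_const c * mon \<alpha> l"
  by (simp add: mp_subst_eval mp_map_single)
lemma mp_subst_const [simp]: "mp_subst (mp_const c) l = mp_const c"
  by (simp add: mp_const_def' mp_subst_single)
lemma mp_subst_var [simp]: "mp_subst (mp_var i) l = l i"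
  by (simp add: mp_var_def' mp_subst_single)
lemma mp_subst_zero [simp]: "mp_subst 0 l = 0"
  by (metis mp_const_0 mp_subst_const)
lemma mp_subst_one [simp]: "mp_subst 1 l = 1"
  by (metis mp_const_1 mp_subst_const)
lemma mp_subst_uminus: "mp_subst (- A) l = - mp_subst A l"
  by (metis add_eq_0_iff2 mp_subst_add mp_subst_zero right_minus)
lemma mp_subst_diff: "mp_subst (A - B) l = mp_subst A l - mp_subst B l"
  by (metis diff_conv_add_uminus mp_subst_add mp_subst_uminus)
lemma mp_subst_power: "mp_subst (A ^ n) l = mp_subst A l ^ n"
  by (induction n) (auto simp: mp_subst_mult)
lemma mp_subst_sum: "mp_subst (sum f S) l = (\<Sum>s\<in>S. mp_subst (f s) l)"
  by (rule additive_sum) (rule mp_subst_add)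
lemma mp_subst_of_nat [simp]: "mp_subst (of_nat n) l = of_nat n"
  by (induction n) (auto simp: mp_subst_add)

lemmas mp_subst_simps = mp_subst_add mp_subst_mult mp_subst_uminus mp_subst_diff mp_subst_power mp_subst_sum

lemma var_power: "mp_var i ^ k = Poly_Mapping.single (Poly_Mapping.single i k) (1::'a::comm_ring_1)"
proof (induction k)
  case 0 then show ?case by simp
next
  case (Suc k)
  have "Poly_Mapping.single i (Suc k) = Poly_Mapping.single i 1 + Poly_Mapping.single i k"
    by (simp add: single_add[symmetric])
  then show ?case using Suc by (simp add: mp_var_def' mult_single)
qed

lemma prod_single_single:
  "(\<Prod>i\<in>S. Poly_Mapping.single (Poly_Mapping.single i (f i)) (1::'a::comm_ring_1))
     = Poly_Mapping.single (\<Sum>i\<in>S. Poly_Mapping.single i (f i)) 1"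
  by (induction S rule: infinite_finite_induct) (simp_all add: mult_single)

lemma single_as_vars:
  "Poly_Mapping.single \<alpha> (c::'a::comm_ring_1) = mp_const c * (\<Prod>i\<in>Poly_Mapping.keys \<alpha>. mp_var i ^ Poly_Mapping.lookup \<alpha> i)"
proof -
  have "(\<Prod>i\<in>Poly_Mapping.keys \<alpha>. mp_var i ^ Poly_Mapping.lookup \<alpha> i) = Poly_Mapping.single \<alpha> (1::'a)"
    by (simp add: var_power prod_single_single flip: pm_expand)
  then show ?thesis by (simp add: mp_const_def' mult_single)
qed

lemma mpoly_induct:
  fixes F :: "'a::comm_ring_1 mpoly"
  assumes const: "\<And>c. P (mp_const c)" and var: "\<And>i. i \<in> V \<Longrightarrow> P (mp_var i)"
    and add: "\<And>A B. P A \<Longrightarrow> P B \<Longrightarrow> P (A+B)" and mult: "\<And>A B. P A \<Longrightarrow> P B \<Longrightarrow> P (A*B)"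
    and vars: "\<forall>\<alpha>\<in>Poly_Mapping.keys F. Poly_Mapping.keys \<alpha> \<subseteq> V"
  shows "P F"
proof -
  have P0: "P 0" using const[of 0] by simp
  have P1: "P 1" using const[of 1] by simp
  have Ppow: "P (A ^ k)" if "P A" for A k
    using that by (induction k) (auto intro: P1 mult)
  have Pprod: "P (\<Prod>i\<in>S. f i)" if "finite S" "\<And>i. i \<in> S \<Longrightarrow> P (f i)" for S and f :: "nat \<Rightarrow> 'a mpoly"
    using that by (induction S rule: finite_induct) (auto intro: P1 mult)
  have Psum: "P (\<Sum>i\<in>S. f i)" if "finite S" "\<And>i. i \<in> S \<Longrightarrow> P (f i)" for S and f :: "(nat \<Rightarrow>\<^sub>0 nat) \<Rightarrow> 'a mpoly"
    using that by (induction S rule: finite_induct) (auto intro: P0 add)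
  have "P (Poly_Mapping.single \<alpha> (Poly_Mapping.lookup F \<alpha>))" if "\<alpha> \<in> Poly_Mapping.keys F" for \<alpha>
  proof -
    have "P (\<Prod>i\<in>Poly_Mapping.keys \<alpha>. mp_var i ^ Poly_Mapping.lookup \<alpha> i)"
      by (rule Pprod) (use vars that in \<open>auto intro: Ppow var\<close>)
    then show ?thesis by (subst single_as_vars) (rule mult[OF const])
  qed
  then have "P (\<Sum>\<alpha>\<in>Poly_Mapping.keys F. Poly_Mapping.single \<alpha> (Poly_Mapping.lookup F \<alpha>))"
    by (intro Psum) auto
  then show ?thesis by (simp flip: pm_expand)
qed

lemma mp_eval_subst: "mp_eval (mp_subst F l) x = mp_eval F (\<lambda>i. mp_eval (l i) x)"
  by (rule mpoly_induct[where V=UNIV and F=F]) (auto simp: mp_subst_add mp_subst_mult mp_eval_add mp_eval_mult)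



lemma mp_monom_zero [simp]: "mp_monom \<alpha> 0 = 0" by (simp add: mp_monom_def)

lemma mp_pderiv_single:
  "mp_pderiv i (Poly_Mapping.single \<alpha> c) = Poly_Mapping.single (\<alpha> - Poly_Mapping.single i 1) (of_nat (Poly_Mapping.lookup \<alpha> i) * c)"
  by (cases "c = 0") (simp_all add: mp_pderiv_def mp_monom_def)

lemma mp_pderiv_add: "mp_pderiv i (A + B) = mp_pderiv i A + mp_pderiv i B"
proof -
  let ?S = "Poly_Mapping.keys A \<union> Poly_Mapping.keys B"
  let ?f = "\<lambda>\<alpha> c. mp_monom (\<alpha> - Poly_Mapping.single i 1) (of_nat (Poly_Mapping.lookup \<alpha> i) * c)"
  have "mp_pderiv i (A + B) = (\<Sum>\<alpha>\<in>?S. ?f \<alpha> (Poly_Mapping.lookup (A+B) \<alpha>))"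
    unfolding mp_pderiv_def
    by (rule sum_keys_superset[symmetric, where f="?f"]) (auto dest: keys_add[THEN subsetD])
  also have "\<dots> = (\<Sum>\<alpha>\<in>?S. ?f \<alpha> (Poly_Mapping.lookup A \<alpha>)) + (\<Sum>\<alpha>\<in>?S. ?f \<alpha> (Poly_Mapping.lookup B \<alpha>))"
    by (simp add: lookup_add distrib_left sum.distrib mp_monom_def single_add)
  also have "\<dots> = mp_pderiv i A + mp_pderiv i B"
    unfolding mp_pderiv_def
    by (subst (1 2) sum_keys_superset[where f="?f"]) auto
  finally show ?thesis .
qed

lemma mp_pderiv_zero [simp]: "mp_pderiv i 0 = 0" by (simp add: mp_pderiv_def)
lemma mp_pderiv_uminus: "mp_pderiv i (- A) = - mp_pderiv i A"
  by (metis add_eq_0_iff2 mp_pderiv_add mp_pderiv_zero right_minus)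
lemma mp_pderiv_diff: "mp_pderiv i (A - B) = mp_pderiv i A - mp_pderiv i B"
  by (metis diff_conv_add_uminus mp_pderiv_add mp_pderiv_uminus)
lemma mp_pderiv_sum: "mp_pderiv i (sum f S) = (\<Sum>s\<in>S. mp_pderiv i (f s))"
  by (rule additive_sum) (rule mp_pderiv_add)

lemma mp_pderiv_const [simp]: "mp_pderiv i (mp_const c) = 0"
  by (simp add: mp_const_def' mp_pderiv_single)

lemma mp_pderiv_var: "mp_pderiv i (mp_var j) = (if i = j then 1 else 0)"
  by (auto simp: mp_var_def' mp_pderiv_single lookup_single)

lemma pm_minus_add1:
  fixes \<alpha> \<beta> :: "nat \<Rightarrow>\<^sub>0 nat"
  assumes "Poly_Mapping.lookup \<alpha> i \<noteq> 0"
  shows "(\<alpha> - Poly_Mapping.single i 1) + \<beta> = (\<alpha> + \<beta>) - Poly_Mapping.single i 1"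
  by (rule poly_mapping_eqI) (use assms in \<open>auto simp: lookup_add lookup_minus lookup_single when_def\<close>)

lemma pm_minus_add2:
  fixes \<alpha> \<beta> :: "nat \<Rightarrow>\<^sub>0 nat"
  assumes "Poly_Mapping.lookup \<beta> i \<noteq> 0"
  shows "\<alpha> + (\<beta> - Poly_Mapping.single i 1) = (\<alpha> + \<beta>) - Poly_Mapping.single i 1"
  by (rule poly_mapping_eqI) (use assms in \<open>auto simp: lookup_add lookup_minus lookup_single when_def\<close>)

lemma mp_pderiv_mult_single:
  fixes a b :: "'a::comm_ring_1"
  shows "mp_pderiv i (Poly_Mapping.single \<alpha> a * Poly_Mapping.single \<beta> b)
    = mp_pderiv i (Poly_Mapping.single \<alpha> a) * Poly_Mapping.single \<beta> b + Poly_Mapping.single \<alpha> a * mp_pderiv i (Poly_Mapping.single \<beta> b)"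
proof -
  let ?e = "Poly_Mapping.single i (1::nat)"
  have L: "mp_pderiv i (Poly_Mapping.single \<alpha> a * Poly_Mapping.single \<beta> b)
     = Poly_Mapping.single (\<alpha> + \<beta> - ?e) (of_nat (Poly_Mapping.lookup \<alpha> i) * (a * b))
       + Poly_Mapping.single (\<alpha> + \<beta> - ?e) (of_nat (Poly_Mapping.lookup \<beta> i) * (a * b))"
    by (simp add: mult_single mp_pderiv_single lookup_add distrib_right single_add)
  have R1: "mp_pderiv i (Poly_Mapping.single \<alpha> a) * Poly_Mapping.single \<beta> b
     = Poly_Mapping.single (\<alpha> + \<beta> - ?e) (of_nat (Poly_Mapping.lookup \<alpha> i) * (a * b))"
  proof (cases "Poly_Mapping.lookup \<alpha> i = 0")
    case False
    show ?thesis by (simp only: mp_pderiv_single mult_single pm_minus_add1[OF False] mult.assoc)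
  qed (simp add: mp_pderiv_single)
  have R2: "Poly_Mapping.single \<alpha> a * mp_pderiv i (Poly_Mapping.single \<beta> b)
     = Poly_Mapping.single (\<alpha> + \<beta> - ?e) (of_nat (Poly_Mapping.lookup \<beta> i) * (a * b))"
  proof (cases "Poly_Mapping.lookup \<beta> i = 0")
    case False
    show ?thesis by (simp only: mp_pderiv_single mult_single pm_minus_add2[OF False]) (simp only: mult.left_commute)
  qed (simp add: mp_pderiv_single)
  show ?thesis using L R1 R2 by simp
qed

lemma mp_pderiv_mult: "mp_pderiv i (A * B) = mp_pderiv i A * B + A * mp_pderiv i (B::'a::comm_ring_1 mpoly)"
  by (rule bilinear_eq[where \<Phi>="\<lambda>A B. mp_pderiv i (A * B)" and \<Psi>="\<lambda>A B. mp_pderiv i A * B + A * mp_pderiv i B"])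
     (simp_all add: mp_pderiv_add distrib_left distrib_right mp_pderiv_mult_single)

lemma mp_pderiv_power:
  "mp_pderiv i (A ^ Suc n) = of_nat (Suc n) * A ^ n * mp_pderiv i (A::'a::comm_ring_1 mpoly)"
proof (induction n)
  case 0 then show ?case by simp
next
  case (Suc n)
  have "mp_pderiv i (A ^ Suc (Suc n)) = mp_pderiv i (A * A ^ Suc n)" by simp
  also have "\<dots> = mp_pderiv i A * A ^ Suc n + A * (of_nat (Suc n) * A ^ n * mp_pderiv i A)"
    by (simp only: mp_pderiv_mult Suc)
  also have "\<dots> = of_nat (Suc (Suc n)) * A ^ Suc n * mp_pderiv i A"
    by (simp add: algebra_simps)
  finally show ?case .
qed

lemma mp_pderiv_const_mult: "mp_pderiv i (mp_const c * A) = mp_const c * mp_pderiv i A"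
  by (simp add: mp_pderiv_mult)

lemma mp_pderiv_of_nat [simp]: "mp_pderiv i (of_nat n) = 0"
  by (metis mp_const_of_nat mp_pderiv_const)

lemma mp_map_pderiv:
  fixes g :: "'a::comm_ring_1 \<Rightarrow> 'b::comm_ring_1"
  assumes "g 0 = 0" "\<And>a b. g (a+b) = g a + g b" "\<And>a b. g (a*b) = g a * g b" "g 1 = 1"
  shows "mp_map g (mp_pderiv i A) = mp_pderiv i (mp_map g A)"
proof -
  have gn: "g (of_nat n) = of_nat n" for n by (induction n) (simp_all add: assms)
  show ?thesis
    by (rule linear_eq[where \<Phi>="\<lambda>A. mp_map g (mp_pderiv i A)" and \<Psi>="\<lambda>A. mp_pderiv i (mp_map g A)"])
       (simp_all add: mp_pderiv_add mp_map_add assms mp_pderiv_single mp_map_single gn)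
qed

lemma chain_rule:
  fixes F :: "'a::comm_ring_1 mpoly"
  assumes "finite V" "\<forall>\<alpha>\<in>Poly_Mapping.keys F. Poly_Mapping.keys \<alpha> \<subseteq> V"
  shows "mp_pderiv j (mp_subst F l) = (\<Sum>i\<in>V. mp_subst (mp_pderiv i F) l * mp_pderiv j (l i))"
proof (rule mpoly_induct[where V=V and F=F])
  show "\<forall>\<alpha>\<in>Poly_Mapping.keys F. Poly_Mapping.keys \<alpha> \<subseteq> V" by fact
  show "mp_pderiv j (mp_subst (mp_const c) l) = (\<Sum>i\<in>V. mp_subst (mp_pderiv i (mp_const c)) l * mp_pderiv j (l i))" for c
    by simp
  show "mp_pderiv j (mp_subst (mp_var k) l) = (\<Sum>i\<in>V. mp_subst (mp_pderiv i (mp_var k)) l * mp_pderiv j (l i))"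
    if "k \<in> V" for k
  proof -
    have "(\<Sum>i\<in>V. mp_subst (mp_pderiv i (mp_var k)) l * mp_pderiv j (l i)) = (\<Sum>i\<in>V. if i = k then mp_pderiv j (l k) else 0)"
      by (rule sum.cong) (auto simp: mp_pderiv_var)
    then show ?thesis using that assms(1) by simp
  qed
  show "mp_pderiv j (mp_subst (A + B) l) = (\<Sum>i\<in>V. mp_subst (mp_pderiv i (A + B)) l * mp_pderiv j (l i))"
    if "mp_pderiv j (mp_subst A l) = (\<Sum>i\<in>V. mp_subst (mp_pderiv i A) l * mp_pderiv j (l i))"
       "mp_pderiv j (mp_subst B l) = (\<Sum>i\<in>V. mp_subst (mp_pderiv i B) l * mp_pderiv j (l i))" for A B
    using that by (simp add: mp_subst_add mp_pderiv_add distrib_right sum.distrib)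
  show "mp_pderiv j (mp_subst (A * B) l) = (\<Sum>i\<in>V. mp_subst (mp_pderiv i (A * B)) l * mp_pderiv j (l i))"
    if "mp_pderiv j (mp_subst A l) = (\<Sum>i\<in>V. mp_subst (mp_pderiv i A) l * mp_pderiv j (l i))"
       "mp_pderiv j (mp_subst B l) = (\<Sum>i\<in>V. mp_subst (mp_pderiv i B) l * mp_pderiv j (l i))" for A B
  proof -
    have "(\<Sum>i\<in>V. mp_subst (mp_pderiv i (A * B)) l * mp_pderiv j (l i))
      = (\<Sum>i\<in>V. (mp_subst (mp_pderiv i A) l * mp_pderiv j (l i)) * mp_subst B l + mp_subst A l * (mp_subst (mp_pderiv i B) l * mp_pderiv j (l i)))"
      by (rule sum.cong) (simp_all add: mp_pderiv_mult mp_subst_add mp_subst_mult algebra_simps)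
    also have "\<dots> = (\<Sum>i\<in>V. mp_subst (mp_pderiv i A) l * mp_pderiv j (l i)) * mp_subst B l + mp_subst A l * (\<Sum>i\<in>V. mp_subst (mp_pderiv i B) l * mp_pderiv j (l i))"
      by (simp add: sum.distrib sum_distrib_left sum_distrib_right)
    also have "\<dots> = mp_pderiv j (mp_subst (A * B) l)"
      using that by (simp add: mp_subst_mult mp_pderiv_mult)
    finally show ?thesis by simp
  qed
qed

definition tdeg :: "(nat \<Rightarrow>\<^sub>0 nat) \<Rightarrow> nat" where
  "tdeg \<alpha> = (\<Sum>i\<in>Poly_Mapping.keys \<alpha>. Poly_Mapping.lookup \<alpha> i)"

lemma tdeg_superset: "finite S \<Longrightarrow> Poly_Mapping.keys \<alpha> \<subseteq> S \<Longrightarrow> (\<Sum>i\<in>S. Poly_Mapping.lookup \<alpha> i) = tdeg \<alpha>"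
  unfolding tdeg_def by (rule sum.mono_neutral_right) (auto simp: in_keys_iff)

lemma var_mult_deriv_single:
  "mp_var i * Poly_Mapping.single (\<alpha> - Poly_Mapping.single i 1) (of_nat (Poly_Mapping.lookup \<alpha> i) * c)
    = Poly_Mapping.single \<alpha> (of_nat (Poly_Mapping.lookup \<alpha> i) * (c::'a::comm_ring_1))"
proof (cases "Poly_Mapping.lookup \<alpha> i = 0")
  case False
  have "Poly_Mapping.single i 1 + (\<alpha> - Poly_Mapping.single i 1) = \<alpha>"
    by (rule poly_mapping_eqI) (use False in \<open>auto simp: lookup_add lookup_minus lookup_single when_def\<close>)
  then show ?thesis by (simp add: mp_var_def' mult_single)
qed simp

lemma single_sum: "Poly_Mapping.single \<alpha> (sum (f :: _ \<Rightarrow> 'a::comm_ring_1) S) = (\<Sum>s\<in>S. Poly_Mapping.single \<alpha> (f s))"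
  by (rule additive_sum) (rule single_add)

lemma euler:
  fixes F :: "'a::comm_ring_1 mpoly"
  assumes "is_form n d F"
  shows "(\<Sum>i\<le>n. mp_var i * mp_pderiv i F) = of_nat d * F"
proof -
  have key: "(\<Sum>i\<le>n. mp_var i * mp_pderiv i (Poly_Mapping.single \<alpha> c)) = of_nat d * Poly_Mapping.single \<alpha> c"
    if "\<alpha> \<in> Poly_Mapping.keys F" for \<alpha> and c :: 'a
  proof -
    have sub: "Poly_Mapping.keys \<alpha> \<subseteq> {..n}" and td: "tdeg \<alpha> = d"
      using assms that unfolding is_form_def tdeg_def by auto
    have "(\<Sum>i\<le>n. mp_var i * mp_pderiv i (Poly_Mapping.single \<alpha> c))
        = (\<Sum>i\<le>n. Poly_Mapping.single \<alpha> (of_nat (Poly_Mapping.lookup \<alpha> i) * c))"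
      by (intro sum.cong refl) (simp only: mp_pderiv_single var_mult_deriv_single)
    also have "\<dots> = Poly_Mapping.single \<alpha> (of_nat (\<Sum>i\<le>n. Poly_Mapping.lookup \<alpha> i) * c)"
      by (simp add: single_sum sum_distrib_right)
    also have "(\<Sum>i\<le>n. Poly_Mapping.lookup \<alpha> i) = d"
      using tdeg_superset[OF _ sub] td by simp
    moreover have "of_nat d * Poly_Mapping.single \<alpha> c = Poly_Mapping.single \<alpha> (of_nat d * c)"
      by (simp only: single_of_nat[symmetric] mult_single add_0)
    ultimately show ?thesis by simp
  qed
  have "(\<Sum>i\<le>n. mp_var i * mp_pderiv i F)
      = (\<Sum>i\<le>n. \<Sum>\<alpha>\<in>Poly_Mapping.keys F. mp_var i * mp_pderiv i (Poly_Mapping.single \<alpha> (Poly_Mapping.lookup F \<alpha>)))"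
    by (subst pm_expand) (simp add: mp_pderiv_sum sum_distrib_left)
  also have "\<dots> = (\<Sum>\<alpha>\<in>Poly_Mapping.keys F. \<Sum>i\<le>n. mp_var i * mp_pderiv i (Poly_Mapping.single \<alpha> (Poly_Mapping.lookup F \<alpha>)))"
    by (rule sum.swap)
  also have "\<dots> = (\<Sum>\<alpha>\<in>Poly_Mapping.keys F. of_nat d * Poly_Mapping.single \<alpha> (Poly_Mapping.lookup F \<alpha>))"
    by (rule sum.cong) (auto simp: key)
  also have "\<dots> = of_nat d * F"
    by (subst (2) pm_expand) (simp add: sum_distrib_left)
  finally show ?thesis .
qed



lemma tdeg_add: "tdeg (\<alpha> + \<beta>) = tdeg \<alpha> + tdeg \<beta>"
proof -
  let ?S = "Poly_Mapping.keys \<alpha> \<union> Poly_Mapping.keys \<beta>"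
  have "tdeg (\<alpha> + \<beta>) = (\<Sum>i\<in>?S. Poly_Mapping.lookup (\<alpha>+\<beta>) i)"
    by (rule tdeg_superset[symmetric]) (auto dest: keys_add[THEN subsetD])
  also have "\<dots> = (\<Sum>i\<in>?S. Poly_Mapping.lookup \<alpha> i) + (\<Sum>i\<in>?S. Poly_Mapping.lookup \<beta> i)"
    by (simp add: lookup_add sum.distrib)
  also have "\<dots> = tdeg \<alpha> + tdeg \<beta>" by (simp add: tdeg_superset)
  finally show ?thesis .
qed

lemma tdeg_zero [simp]: "tdeg 0 = 0" by (simp add: tdeg_def)
lemma tdeg_single [simp]: "tdeg (Poly_Mapping.single i k) = k" by (simp add: tdeg_def)
lemma tdeg_eq_0: "tdeg \<alpha> = 0 \<Longrightarrow> \<alpha> = 0"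
  unfolding tdeg_def by (simp add: in_keys_iff) (metis keys_eq_empty lookup_not_eq_zero_eq_in_keys ex_in_conv)

definition mdeg :: "'a::zero mpoly \<Rightarrow> nat" where
  "mdeg A = Max (insert 0 (tdeg ` Poly_Mapping.keys A))"

lemma mdeg_ge: "\<alpha> \<in> Poly_Mapping.keys A \<Longrightarrow> tdeg \<alpha> \<le> mdeg A"
  unfolding mdeg_def by (rule Max_ge) auto

lemma mdeg_le: "(\<And>\<alpha>. \<alpha> \<in> Poly_Mapping.keys A \<Longrightarrow> tdeg \<alpha> \<le> k) \<Longrightarrow> mdeg A \<le> k"
  unfolding mdeg_def by (subst Max_le_iff) auto

lemma mdeg_attained:
  assumes "A \<noteq> 0" shows "\<exists>\<alpha>\<in>Poly_Mapping.keys A. tdeg \<alpha> = mdeg A"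
proof -
  have ne: "tdeg ` Poly_Mapping.keys A \<noteq> {}" using assms by simp
  have "mdeg A = max 0 (Max (tdeg ` Poly_Mapping.keys A))"
    unfolding mdeg_def by (rule Max_insert) (use ne in auto)
  also have "\<dots> = Max (tdeg ` Poly_Mapping.keys A)" by simp
  finally have "mdeg A \<in> tdeg ` Poly_Mapping.keys A"
    using Max_in[OF _ ne] by simp
  then show ?thesis by auto
qed

definition hc :: "nat \<Rightarrow> 'a::comm_ring_1 mpoly \<Rightarrow> 'a mpoly" where
  "hc k A = (\<Sum>\<alpha>\<in>{\<alpha>\<in>Poly_Mapping.keys A. tdeg \<alpha> = k}. Poly_Mapping.single \<alpha> (Poly_Mapping.lookup A \<alpha>))"

lemma lookup_hc: "Poly_Mapping.lookup (hc k A) \<gamma> = (if tdeg \<gamma> = k then Poly_Mapping.lookup A \<gamma> else 0)"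
proof -
  have "Poly_Mapping.lookup (hc k A) \<gamma> = (\<Sum>\<alpha>\<in>{\<alpha>\<in>Poly_Mapping.keys A. tdeg \<alpha> = k}. if \<alpha> = \<gamma> then Poly_Mapping.lookup A \<alpha> else 0)"
    by (simp add: hc_def lookup_sum lookup_single when_def)
  also have "\<dots> = (if \<gamma> \<in> {\<alpha>\<in>Poly_Mapping.keys A. tdeg \<alpha> = k} then Poly_Mapping.lookup A \<gamma> else 0)"
    by (rule sum.delta) simp
  finally show ?thesis by (auto simp: in_keys_iff)
qed

lemma hc_add: "hc k (A + B) = hc k A + hc k B"
  by (rule poly_mapping_eqI) (simp add: lookup_hc lookup_add)

lemma hc_single: "hc k (Poly_Mapping.single \<alpha> c) = (if tdeg \<alpha> = k then Poly_Mapping.single \<alpha> c else 0)"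
  by (rule poly_mapping_eqI) (auto simp: lookup_hc lookup_single when_def)

lemma hc_mult_top:
  fixes A B :: "'a::comm_ring_1 mpoly"
  assumes "\<And>\<alpha>. \<alpha> \<in> Poly_Mapping.keys A \<Longrightarrow> tdeg \<alpha> \<le> a" "\<And>\<beta>. \<beta> \<in> Poly_Mapping.keys B \<Longrightarrow> tdeg \<beta> \<le> b"
  shows "hc (a+b) (A*B) = hc a A * hc b B"
proof -
  let ?sA = "\<lambda>\<alpha>. Poly_Mapping.single \<alpha> (Poly_Mapping.lookup A \<alpha>)"
  let ?sB = "\<lambda>\<beta>. Poly_Mapping.single \<beta> (Poly_Mapping.lookup B \<beta>)"
  have eA: "A = (\<Sum>\<alpha>\<in>Poly_Mapping.keys A. ?sA \<alpha>)" by (rule pm_expand)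
  have eB: "B = (\<Sum>\<beta>\<in>Poly_Mapping.keys B. ?sB \<beta>)" by (rule pm_expand)
  have AB: "A * B = (\<Sum>\<alpha>\<in>Poly_Mapping.keys A. \<Sum>\<beta>\<in>Poly_Mapping.keys B. ?sA \<alpha> * ?sB \<beta>)"
    by (subst eA, subst eB) (rule sum_product)
  have hcs: "hc k (sum f S) = (\<Sum>s\<in>S. hc k (f s))" for k and f :: "'x \<Rightarrow> 'a mpoly" and S
    by (rule additive_sum) (rule hc_add)
  have piece: "hc (a+b) (?sA \<alpha> * ?sB \<beta>) = hc a (?sA \<alpha>) * hc b (?sB \<beta>)"
    if "\<alpha> \<in> Poly_Mapping.keys A" "\<beta> \<in> Poly_Mapping.keys B" for \<alpha> \<beta>
    using assms(1)[OF that(1)] assms(2)[OF that(2)]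
    by (auto simp: mult_single hc_single tdeg_add)
  have "hc (a+b) (A*B) = (\<Sum>\<alpha>\<in>Poly_Mapping.keys A. \<Sum>\<beta>\<in>Poly_Mapping.keys B. hc (a+b) (?sA \<alpha> * ?sB \<beta>))"
    by (simp add: AB hcs)
  also have "\<dots> = (\<Sum>\<alpha>\<in>Poly_Mapping.keys A. \<Sum>\<beta>\<in>Poly_Mapping.keys B. hc a (?sA \<alpha>) * hc b (?sB \<beta>))"
    by (intro sum.cong refl) (simp add: piece)
  also have "\<dots> = (\<Sum>\<alpha>\<in>Poly_Mapping.keys A. hc a (?sA \<alpha>)) * (\<Sum>\<beta>\<in>Poly_Mapping.keys B. hc b (?sB \<beta>))"
    by (rule sum_product[symmetric])
  also have "\<dots> = hc a A * hc b B"
    by (subst (3) eA, subst (3) eB) (simp add: hcs)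
  finally show ?thesis .
qed

lemma hc_mdeg_nonzero: "A \<noteq> 0 \<Longrightarrow> hc (mdeg A) A \<noteq> 0"
  by (metis lookup_hc lookup_zero mdeg_attained lookup_not_eq_zero_eq_in_keys)

lemma mdeg_mult:
  fixes A B :: "'a::idom mpoly"
  assumes "A \<noteq> 0" "B \<noteq> 0"
  shows "mdeg (A * B) = mdeg A + mdeg B"
proof (rule antisym)
  show "mdeg (A * B) \<le> mdeg A + mdeg B"
  proof (rule mdeg_le)
    fix \<gamma> assume "\<gamma> \<in> Poly_Mapping.keys (A * B)"
    then have "\<gamma> \<in> {a + b | a b. a \<in> Poly_Mapping.keys A \<and> b \<in> Poly_Mapping.keys B}"
      by (rule keys_mult[THEN subsetD])
    then obtain \<alpha> \<beta> where "\<alpha> \<in> Poly_Mapping.keys A" "\<beta> \<in> Poly_Mapping.keys B" "\<gamma> = \<alpha> + \<beta>"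
      by blast
    then show "tdeg \<gamma> \<le> mdeg A + mdeg B" by (simp add: tdeg_add add_mono mdeg_ge)
  qed
  have "hc (mdeg A + mdeg B) (A*B) = hc (mdeg A) A * hc (mdeg B) B"
    by (rule hc_mult_top) (auto intro: mdeg_ge)
  also have "\<dots> \<noteq> 0" by (simp add: hc_mdeg_nonzero[OF assms(1)] hc_mdeg_nonzero[OF assms(2)])
  finally have "Poly_Mapping.keys (hc (mdeg A + mdeg B) (A*B)) \<noteq> {}" by simp
  then obtain \<gamma> where "\<gamma> \<in> Poly_Mapping.keys (hc (mdeg A + mdeg B) (A*B))" by blast
  then have "Poly_Mapping.lookup (hc (mdeg A + mdeg B) (A*B)) \<gamma> \<noteq> 0" by (simp add: in_keys_iff)
  then have "\<gamma> \<in> Poly_Mapping.keys (A*B)" "tdeg \<gamma> = mdeg A + mdeg B"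
    by (auto simp: lookup_hc in_keys_iff split: if_splits)
  then show "mdeg A + mdeg B \<le> mdeg (A * B)" by (metis mdeg_ge)
qed

lemma mdeg_const [simp]: "mdeg (mp_const c) = 0"
  by (rule le_zero_eq[THEN iffD1], rule mdeg_le) (auto simp: mp_const_def' split: if_splits)

lemma mdeg_var [simp]: "mdeg (mp_var i :: 'a::comm_ring_1 mpoly) = 1"
  by (auto simp: mdeg_def mp_var_def')

lemma mdeg_one [simp]: "mdeg 1 = 0" by (metis mdeg_const mp_const_1)

lemma mdeg_power: "(A::'a::idom mpoly) \<noteq> 0 \<Longrightarrow> mdeg (A ^ m) = m * mdeg A"
  by (induction m) (simp_all add: mdeg_mult)

lemma mdeg_prod: "(\<And>s. s \<in> S \<Longrightarrow> f s \<noteq> 0) \<Longrightarrow> mdeg (prod f S :: 'a::idom mpoly) = (\<Sum>s\<in>S. mdeg (f s))"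
proof (induction S rule: infinite_finite_induct)
  case (infinite A) then show ?case by simp
next
  case empty then show ?case by simp
next
  case (insert x F)
  then show ?case by (simp add: mdeg_mult)
qed

lemma mdeg0_const:
  assumes "mdeg A = 0" shows "A = mp_const (Poly_Mapping.lookup A 0)"
proof -
  have "Poly_Mapping.keys A \<subseteq> {0}"
    using mdeg_ge[of _ A] assms tdeg_eq_0 by fastforce
  then show ?thesis
    by (intro poly_mapping_eqI) (auto simp: mp_const_def' lookup_single when_def in_keys_iff)
qed

lemma keys_pderiv:
  assumes "\<gamma> \<in> Poly_Mapping.keys (mp_pderiv i A)"
  shows "\<exists>\<alpha>\<in>Poly_Mapping.keys A. tdeg \<gamma> + 1 = tdeg \<alpha>"
proof -
  have "\<gamma> \<in> (\<Union>\<alpha>\<in>Poly_Mapping.keys A. Poly_Mapping.keys (mp_monom (\<alpha> - Poly_Mapping.single i 1) (of_nat (Poly_Mapping.lookup \<alpha> i) * Poly_Mapping.lookup A \<alpha>)))"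
    using assms unfolding mp_pderiv_def by (rule keys_sum[THEN subsetD])
  then obtain \<alpha> where a: "\<alpha> \<in> Poly_Mapping.keys A" and
    g: "\<gamma> \<in> Poly_Mapping.keys (Poly_Mapping.single (\<alpha> - Poly_Mapping.single i 1) (of_nat (Poly_Mapping.lookup \<alpha> i) * Poly_Mapping.lookup A \<alpha>))"
    by (auto simp: mp_monom_def)
  have nz0: "of_nat (Poly_Mapping.lookup \<alpha> i) * Poly_Mapping.lookup A \<alpha> \<noteq> 0" and ge: "\<gamma> = \<alpha> - Poly_Mapping.single i 1"
    using g by (auto split: if_splits)
  have nz: "Poly_Mapping.lookup \<alpha> i \<noteq> 0" using nz0 by (metis mult_zero_left of_nat_0)
  have "Poly_Mapping.single i 1 + (\<alpha> - Poly_Mapping.single i 1) = \<alpha>"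
    by (rule poly_mapping_eqI) (use nz in \<open>auto simp: lookup_add lookup_minus lookup_single when_def\<close>)
  then have "tdeg \<alpha> = tdeg (Poly_Mapping.single i 1 + (\<alpha> - Poly_Mapping.single i 1))" by simp
  also have "\<dots> = 1 + tdeg \<gamma>" by (simp only: tdeg_add ge tdeg_single)
  finally have "tdeg \<gamma> + 1 = tdeg \<alpha>" by simp
  then show ?thesis using a by blast
qed

lemma mdeg_pderiv_less:
  assumes "mp_pderiv i A \<noteq> 0" shows "mdeg (mp_pderiv i A) < mdeg A"
proof -
  obtain \<gamma> where g: "\<gamma> \<in> Poly_Mapping.keys (mp_pderiv i A)" "tdeg \<gamma> = mdeg (mp_pderiv i A)"
    using mdeg_attained[OF assms] by blast
  obtain \<alpha> where "\<alpha> \<in> Poly_Mapping.keys A" "tdeg \<gamma> + 1 = tdeg \<alpha>"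
    using keys_pderiv[OF g(1)] by blast
  then show ?thesis using g(2) mdeg_ge[of \<alpha> A] by simp
qed

definition lsub :: "nat \<Rightarrow> nat \<Rightarrow> 'a::comm_ring_1 \<Rightarrow> nat \<Rightarrow> 'a mpoly" where
  "lsub i j c = (\<lambda>k. if k = i then mp_const c * mp_var j else mp_var k)"

lemma factor_thm:
  fixes A :: "'a::comm_ring_1 mpoly"
  shows "\<exists>B. A - mp_subst A (lsub i j c) = (mp_var i - mp_const c * mp_var j) * B"
proof (rule mpoly_induct[where V=UNIV and F=A])
  show "\<exists>B. mp_const d - mp_subst (mp_const d) (lsub i j c) = (mp_var i - mp_const c * mp_var j) * B" for d
    by (rule exI[of _ 0]) simp
  show "\<exists>B. mp_var k - mp_subst (mp_var k) (lsub i j c) = (mp_var i - mp_const c * mp_var j) * B" for k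
    by (cases "k = i") (auto simp: lsub_def intro: exI[of _ 1] exI[of _ 0])
  show "\<exists>B. (Z1 + Z2) - mp_subst (Z1 + Z2) (lsub i j c) = (mp_var i - mp_const c * mp_var j) * B"
    if "\<exists>B. Z1 - mp_subst Z1 (lsub i j c) = (mp_var i - mp_const c * mp_var j) * B"
       "\<exists>B. Z2 - mp_subst Z2 (lsub i j c) = (mp_var i - mp_const c * mp_var j) * B" for Z1 Z2
  proof -
    from that obtain B1 B2 where "Z1 - mp_subst Z1 (lsub i j c) = (mp_var i - mp_const c * mp_var j) * B1"
      "Z2 - mp_subst Z2 (lsub i j c) = (mp_var i - mp_const c * mp_var j) * B2" by blast
    note eqs = this
    have "(Z1 + Z2) - mp_subst (Z1 + Z2) (lsub i j c) = (Z1 - mp_subst Z1 (lsub i j c)) + (Z2 - mp_subst Z2 (lsub i j c))"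
      by (simp add: mp_subst_add)
    also have "\<dots> = (mp_var i - mp_const c * mp_var j) * (B1 + B2)"
      by (simp only: eqs distrib_left)
    finally show ?thesis by blast
  qed
  show "\<exists>B. (Z1 * Z2) - mp_subst (Z1 * Z2) (lsub i j c) = (mp_var i - mp_const c * mp_var j) * B"
    if "\<exists>B. Z1 - mp_subst Z1 (lsub i j c) = (mp_var i - mp_const c * mp_var j) * B"
       "\<exists>B. Z2 - mp_subst Z2 (lsub i j c) = (mp_var i - mp_const c * mp_var j) * B" for Z1 Z2
  proof -
    from that obtain B1 B2 where 1: "Z1 - mp_subst Z1 (lsub i j c) = (mp_var i - mp_const c * mp_var j) * B1"
      and 2: "Z2 - mp_subst Z2 (lsub i j c) = (mp_var i - mp_const c * mp_var j) * B2" by blast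
    have "Z1 * Z2 - mp_subst (Z1 * Z2) (lsub i j c)
       = (Z1 - mp_subst Z1 (lsub i j c)) * Z2 + mp_subst Z1 (lsub i j c) * (Z2 - mp_subst Z2 (lsub i j c))"
      by (simp add: mp_subst_mult algebra_simps)
    also have "\<dots> = (mp_var i - mp_const c * mp_var j) * (B1 * Z2 + mp_subst Z1 (lsub i j c) * B2)"
      by (simp add: 1 2 algebra_simps)
    finally show ?thesis by blast
  qed
qed simp

lemma lin_dvd_iff:
  fixes A :: "'a::comm_ring_1 mpoly"
  assumes "i \<noteq> j"
  shows "(mp_var i - mp_const c * mp_var j) dvd A \<longleftrightarrow> mp_subst A (lsub i j c) = 0"
proof
  assume "(mp_var i - mp_const c * mp_var j) dvd A"
  then obtain C where "A = (mp_var i - mp_const c * mp_var j) * C" by (auto simp: dvd_def)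
  then show "mp_subst A (lsub i j c) = 0"
    using assms by (simp add: mp_subst_mult mp_subst_diff lsub_def)
next
  assume "mp_subst A (lsub i j c) = 0"
  then show "(mp_var i - mp_const c * mp_var j) dvd A"
    using factor_thm[of A i j c] by (auto simp: dvd_def)
qed

definition lprime :: "'a::comm_ring_1 \<Rightarrow> bool" where
  "lprime L \<longleftrightarrow> (\<forall>A B. L dvd A * B \<longrightarrow> L dvd A \<or> L dvd B)"

lemma lin_lprime:
  fixes c :: "'a::idom"
  assumes "i \<noteq> j"
  shows "lprime (mp_var i - mp_const c * mp_var j)"
  unfolding lprime_def lin_dvd_iff[OF assms] by (simp add: mp_subst_mult)

lemma lprime_unit_mult:
  fixes L :: "'a::field mpoly"
  assumes "lprime L" "u \<noteq> 0"
  shows "lprime (mp_const u * L)"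
proof -
  define v where "v = mp_const (inverse u)"
  have v: "1 = mp_const u * v" unfolding v_def using assms(2) by (simp flip: mp_const_mult)
  have iff: "mp_const u * L dvd Z1 \<longleftrightarrow> L dvd Z1" for Z1
  proof
    assume "mp_const u * L dvd Z1" then show "L dvd Z1" by (metis dvd_mult_right)
  next
    assume "L dvd Z1"
    then obtain Z2 where "Z1 = L * Z2" by (auto simp: dvd_def)
    then have "Z1 = (mp_const u * L) * (v * Z2)" using v by (metis mult.assoc mult.commute mult_1)
    then show "mp_const u * L dvd Z1" by simp
  qed
  show ?thesis using assms(1) unfolding lprime_def iff .
qed

lemma lprime_cancel:
  fixes L :: "'a::idom"
  assumes "lprime L" "L \<noteq> 0" "\<not> L dvd G" "G dvd L * E"
  shows "G dvd E"
proof -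
  obtain H where H: "L * E = G * H" using assms(4) by (auto simp: dvd_def)
  then have "L dvd G * H" by (metis dvd_triv_left)
  then have "L dvd H" using assms(1,3) unfolding lprime_def by blast
  then obtain H' where H': "H = L * H'" by (auto simp: dvd_def)
  have "L \<noteq> 0" using assms(2) by auto
  then have "E = G * H'" using H H' by (simp add: algebra_simps)
  then show ?thesis by simp
qed



lemma card_ge2: "2 \<le> CARD('a::{finite,field})"
proof -
  have "card {0::'a, 1} = 2" by simp
  moreover have "card {0::'a, 1} \<le> CARD('a)" by (rule card_mono) auto
  ultimately show ?thesis by simp
qed

lemma ff_power_card: "(x::'a::{finite,field}) ^ CARD('a) = x"
proof (cases "x = 0")
  case False
  have "x * (\<Prod>y\<in>UNIV-{0}. x * y) = x * x ^ (card (UNIV :: 'a set) - 1) * \<Prod>(UNIV-{0})"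
    by (simp add: prod.distrib mult_ac)
  also have "x * x ^ (card (UNIV :: 'a set) - 1) = x ^ Suc (card (UNIV :: 'a set) - 1)"
    by (subst power_Suc) auto
  also have "Suc (card (UNIV :: 'a set) - 1) = card (UNIV :: 'a set)"
    using finite_UNIV_card_ge_0[where ?'a = 'a] by simp
  also have "(\<Prod>y\<in>UNIV-{0}. x * y) = (\<Prod>y\<in>UNIV-{0}. y)"
    by (rule prod.reindex_bij_witness[of _ "\<lambda>y. y / x" "\<lambda>y. x * y"]) (use False in auto)
  finally show ?thesis
    by simp
qed (use finite_UNIV_card_ge_0[where ?'a = 'a] in auto)

lemma binom_card_zero:
  assumes "0 < k" "k < CARD('a::{finite,field})"
  shows "of_nat (CARD('a) choose k) = (0::'a)"
proof -
  define q where "q = CARD('a)"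
  have q2: "2 \<le> q" unfolding q_def by (rule card_ge2)
  define g where "g i = (if 0 < i \<and> i < q then of_nat (q choose i) else (0::'a))" for i
  define f where "f = (\<Sum>i\<le>q. monom (g i) i)"
  have cf: "coeff f n = (if n \<le> q then g n else 0)" for n
  proof (cases "n \<le> q")
    case True then show ?thesis unfolding f_def by (simp add: coeff_sum_monom)
  next
    case False then show ?thesis unfolding f_def by (simp add: coeff_sum coeff_monom)
  qed
  have deg: "degree f \<le> q - 1"
    by (rule degree_le) (auto simp: cf g_def)
  have root: "poly f t = 0" for t
  proof -
    have "poly f t = (\<Sum>i\<le>q. g i * t ^ i)" unfolding f_def by (simp add: poly_sum poly_monom)
    also have "\<dots> = (\<Sum>i\<le>q. of_nat (q choose i) * t ^ i - (if i = 0 then 1 else 0) - (if i = q then t ^ q else 0))"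
      by (rule sum.cong) (use q2 in \<open>auto simp: g_def\<close>)
    also have "\<dots> = (\<Sum>i\<le>q. of_nat (q choose i) * t ^ i) - 1 - t ^ q"
      by (simp add: sum_subtractf)
    also have "(\<Sum>i\<le>q. of_nat (q choose i) * t ^ i) = (t + 1) ^ q"
      by (simp add: binomial_ring)
    also have "(t + 1) ^ q = t ^ q + 1"
    proof -
      have "(t + 1) ^ q = t + 1" unfolding q_def by (rule ff_power_card)
      also have "\<dots> = t ^ q + 1" unfolding q_def by (simp add: ff_power_card)
      finally show ?thesis .
    qed
    finally show ?thesis by simp
  qed
  have "f = 0"
  proof (rule ccontr)
    assume "f \<noteq> 0"
    then have "card {x. poly f x = 0} \<le> degree f" by (rule card_poly_roots_bound)
    also have "{x. poly f x = 0} = (UNIV :: 'a set)" using root by auto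
    finally show False using deg q2 unfolding q_def by simp
  qed
  then have "coeff f k = 0" by simp
  then show ?thesis using assms unfolding cf g_def q_def by simp
qed

lemma fd_general:
  fixes x y :: "'b::comm_ring_1"
  assumes "\<And>k. 0 < k \<Longrightarrow> k < n \<Longrightarrow> of_nat (n choose k) = (0::'b)" "0 < n"
  shows "(x + y) ^ n = x ^ n + y ^ n"
proof -
  have "(x + y) ^ n = (\<Sum>k\<le>n. of_nat (n choose k) * x ^ k * y ^ (n - k))"
    by (rule binomial_ring)
  also have "\<dots> = (\<Sum>k\<in>{0,n}. of_nat (n choose k) * x ^ k * y ^ (n - k))"
  proof (intro sum.mono_neutral_right ballI)
    fix k assume "k \<in> {..n} - {0, n}"
    then show "of_nat (n choose k) * x ^ k * y ^ (n - k) = 0" using assms(1)[of k] by auto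
  qed auto
  finally show ?thesis using assms(2) by (simp add: add_ac)
qed

lemma mp_of_nat_card_choose:
  assumes "0 < k" "k < CARD('a::{finite,field})"
  shows "of_nat (CARD('a) choose k) = (0::'a mpoly)"
  by (metis assms binom_card_zero mp_const_0 mp_const_of_nat)

lemma mp_frob_linear:
  fixes a b :: "'a::{finite,field}"
  shows "(mp_const a * A + mp_const b * B) ^ CARD('a) = mp_const a * A ^ CARD('a) + mp_const b * B ^ CARD('a)"
proof -
  have "(mp_const a * A + mp_const b * B) ^ CARD('a) = (mp_const a * A) ^ CARD('a) + (mp_const b * B) ^ CARD('a)"
    by (rule fd_general) (use mp_of_nat_card_choose card_ge2[where 'a='a] in auto)
  also have "\<dots> = mp_const a * A ^ CARD('a) + mp_const b * B ^ CARD('a)"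
    by (simp add: power_mult_distrib ff_power_card flip: mp_const_power)
  finally show ?thesis .
qed

lemma CHAR_ff_prime: "prime CHAR('a::{finite,field})"
  by (rule prime_CHAR_semidom) (rule finite_imp_CHAR_pos, simp)

lemma pth_root_surj: "\<exists>r. r ^ CHAR('a) = (c::'a::{finite,field})"
proof -
  have inj: "inj (\<lambda>x::'a. x ^ CHAR('a))"
  proof (rule injI)
    fix x y :: 'a assume "x ^ CHAR('a) = y ^ CHAR('a)"
    moreover have "x ^ CHAR('a) = (x - y) ^ CHAR('a) + y ^ CHAR('a)"
      using freshmans_dream[OF CHAR_ff_prime refl, of "x - y" y] by simp
    ultimately have "(x - y) ^ CHAR('a) = 0" by simp
    then show "x = y" by simp
  qed
  then have "surj (\<lambda>x::'a. x ^ CHAR('a))" using finite_UNIV_inj_surj[of "\<lambda>x::'a. x ^ CHAR('a)"] by simp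
  then show ?thesis by (metis surjD)
qed

lemma ac_fixed_in_range:
  fixes u :: "'a::{finite,field} alg_closure"
  assumes "u ^ CARD('a) = u"
  shows "u \<in> range to_ac"
proof -
  define q where "q = CARD('a)"
  have q2: "2 \<le> q" unfolding q_def by (rule card_ge2)
  define r where "r = monom (1::'a alg_closure) q - [:0, 1:]"
  have pr: "poly r x = x ^ q - x" for x by (simp add: r_def poly_monom)
  obtain m where qm: "q = Suc (Suc m)" using q2 by (metis add_2_eq_Suc le_Suc_ex)
  have cr: "coeff r q = 1" using qm by (simp add: r_def coeff_monom)
  then have rnz: "r \<noteq> 0" by auto
  have dr: "degree r \<le> q"
    by (rule degree_le) (use qm in \<open>auto simp: r_def coeff_monom coeff_pCons split: nat.splits\<close>)
  have sub: "range to_ac \<subseteq> {x. poly r x = 0}"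
    by (auto simp: pr q_def ff_power_card simp flip: to_ac_power)
  have fin: "finite {x. poly r x = 0}" by (rule poly_roots_finite[OF rnz])
  have c1: "card {x. poly r x = 0} \<le> q" using card_poly_roots_bound[OF rnz] dr by simp
  have c2: "card (range (to_ac :: 'a \<Rightarrow> _)) = q" unfolding q_def
    by (simp add: card_image inj_to_ac)
  have "range to_ac = {x. poly r x = 0}"
    by (rule card_subset_eq[OF fin sub]) (use c1 c2 card_mono[OF fin sub] in simp)
  then show ?thesis using assms by (simp add: pr q_def)
qed



definition lnf :: "(nat \<Rightarrow> 'a::comm_ring_1) \<Rightarrow> (nat \<Rightarrow> 'a) \<Rightarrow> nat \<Rightarrow> 'a mpoly" where
  "lnf P Q = (\<lambda>i. mp_const (P i) * mp_var 0 + mp_const (Q i) * mp_var 1)"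

definition Rq :: "nat \<Rightarrow> 'a::comm_ring_1 mpoly" where
  "Rq q = mp_var 0 * mp_var 1 ^ q - mp_var 0 ^ q * mp_var 1"

lemma restrict_line_lnf: "restrict_line F P Q = mp_subst F (lnf P Q)"
  by (simp add: restrict_line_def lnf_def)

lemma pderiv_lnf:
  "mp_pderiv j (lnf P Q i) = (if j = 0 then mp_const (P i) else if j = 1 then mp_const (Q i) else 0)"
  by (simp add: lnf_def mp_pderiv_add mp_pderiv_const_mult mp_pderiv_var)

lemma form_vars: "is_form n d F \<Longrightarrow> \<forall>\<alpha>\<in>Poly_Mapping.keys F. Poly_Mapping.keys \<alpha> \<subseteq> {..n}"
  unfolding is_form_def by auto

lemma chain_lnf:
  assumes "is_form n d F"
  shows "mp_pderiv j (mp_subst F (lnf P Q)) =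
    (\<Sum>i\<le>n. mp_subst (mp_pderiv i F) (lnf P Q) * (if j = 0 then mp_const (P i) else if j = 1 then mp_const (Q i) else 0))"
  using chain_rule[OF _ form_vars[OF assms], of j "lnf P Q"] by (simp add: pderiv_lnf)

lemma restr_key_identities:
  fixes F :: "'a::{finite,field} mpoly" and P Q :: "nat \<Rightarrow> 'a"
  assumes form: "is_form n d F" and nc: "frobenius_nonclassical n CARD('a) F"
  defines "G \<equiv> restrict_line F P Q"
  shows "G dvd Rq CARD('a) * mp_pderiv 1 G" "G dvd Rq CARD('a) * mp_pderiv 0 G"
    and "\<And>j. j \<noteq> 0 \<Longrightarrow> j \<noteq> 1 \<Longrightarrow> mp_pderiv j G = 0"
proof -
  let ?q = "CARD('a)"
  let ?l = "lnf P Q"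
  let ?s = "\<lambda>A. mp_subst A ?l"
  define A where "A = mp_pderiv 0 G"
  define B where "B = mp_pderiv 1 G"
  have GA: "A = (\<Sum>i\<le>n. ?s (mp_pderiv i F) * mp_const (P i))"
    unfolding A_def G_def restrict_line_lnf by (simp add: chain_lnf[OF form])
  have GB: "B = (\<Sum>i\<le>n. ?s (mp_pderiv i F) * mp_const (Q i))"
    unfolding B_def G_def restrict_line_lnf by (simp add: chain_lnf[OF form])
  show "mp_pderiv j G = 0" if "j \<noteq> 0" "j \<noteq> 1" for j
    unfolding G_def restrict_line_lnf using that by (simp add: chain_lnf[OF form])
  obtain H where H: "(\<Sum>i\<le>n. mp_var i ^ ?q * mp_pderiv i F) = F * H"
    using nc unfolding frobenius_nonclassical_def by (auto simp: dvd_def)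
  have E1: "G * ?s H = mp_var 0 ^ ?q * A + mp_var 1 ^ ?q * B"
  proof -
    have "G * ?s H = ?s (F * H)" by (simp add: G_def restrict_line_lnf mp_subst_mult)
    also have "\<dots> = (\<Sum>i\<le>n. ?l i ^ ?q * ?s (mp_pderiv i F))"
      by (simp flip: H add: mp_subst_sum mp_subst_mult mp_subst_power)
    also have "\<dots> = (\<Sum>i\<le>n. (mp_const (P i) * mp_var 0 ^ ?q + mp_const (Q i) * mp_var 1 ^ ?q) * ?s (mp_pderiv i F))"
      by (simp add: lnf_def mp_frob_linear)
    also have "\<dots> = mp_var 0 ^ ?q * A + mp_var 1 ^ ?q * B"
      by (simp add: GA GB sum_distrib_left sum.distrib algebra_simps)
    finally show ?thesis .
  qed
  have E2: "mp_var 0 * A + mp_var 1 * B = of_nat d * G"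
  proof -
    have "of_nat d * G = ?s (\<Sum>i\<le>n. mp_var i * mp_pderiv i F)"
      by (simp add: euler[OF form] G_def restrict_line_lnf mp_subst_mult)
    also have "\<dots> = (\<Sum>i\<le>n. ?l i * ?s (mp_pderiv i F))"
      by (simp add: mp_subst_sum mp_subst_mult)
    also have "\<dots> = mp_var 0 * A + mp_var 1 * B"
      by (simp add: lnf_def GA GB sum_distrib_left sum.distrib algebra_simps)
    finally show ?thesis by simp
  qed
  have "G * (mp_var 0 * ?s H - of_nat d * mp_var 0 ^ ?q) = mp_var 0 * (G * ?s H) - mp_var 0 ^ ?q * (of_nat d * G)"
    by (simp add: algebra_simps)
  also have "\<dots> = mp_var 0 * (mp_var 0 ^ ?q * A + mp_var 1 ^ ?q * B) - mp_var 0 ^ ?q * (mp_var 0 * A + mp_var 1 * B)"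
    by (simp only: E1 E2)
  also have "\<dots> = Rq ?q * B"
    by (simp add: Rq_def algebra_simps)
  finally show "G dvd Rq ?q * mp_pderiv 1 G" unfolding B_def by (metis dvd_triv_left)
  have "G * (of_nat d * mp_var 1 ^ ?q - mp_var 1 * ?s H) = mp_var 1 ^ ?q * (of_nat d * G) - mp_var 1 * (G * ?s H)"
    by (simp add: algebra_simps)
  also have "\<dots> = mp_var 1 ^ ?q * (mp_var 0 * A + mp_var 1 * B) - mp_var 1 * (mp_var 0 ^ ?q * A + mp_var 1 ^ ?q * B)"
    by (simp only: E1 E2)
  also have "\<dots> = Rq ?q * A"
    by (simp add: Rq_def algebra_simps)
  finally show "G dvd Rq ?q * mp_pderiv 0 G" unfolding A_def by (metis dvd_triv_left)
qed

lemma eval_restrict: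
  "mp_eval (restrict_line F P Q) y = mp_eval F (\<lambda>i. y 0 * P i + y 1 * Q i)"
  by (simp add: restrict_line_lnf mp_eval_subst lnf_def mp_eval_add mp_eval_mult mult.commute)



lemma lin2:
  fixes a b :: "'b::field"
  assumes "i \<noteq> j" "a \<noteq> 0 \<or> b \<noteq> 0"
  shows "mp_const a * mp_var i + mp_const b * mp_var j \<noteq> 0"
    "mdeg (mp_const a * mp_var i + mp_const b * mp_var j) = 1"
proof -
  let ?L = "mp_const a * mp_var i + mp_const b * mp_var j"
  have L: "?L = Poly_Mapping.single (Poly_Mapping.single i 1) a + Poly_Mapping.single (Poly_Mapping.single j 1) b"
    by (simp add: mp_const_def' mp_var_def' mult_single)
  have ne: "Poly_Mapping.single i (1::nat) \<noteq> Poly_Mapping.single j 1"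
    using assms(1) by (metis lookup_single_eq lookup_single_not_eq zero_neq_one)
  have la: "Poly_Mapping.lookup ?L (Poly_Mapping.single i 1) = a"
    using ne by (simp add: L lookup_add lookup_single_not_eq)
  have lb: "Poly_Mapping.lookup ?L (Poly_Mapping.single j 1) = b"
    using ne by (simp add: L lookup_add lookup_single_not_eq)
  show nz: "?L \<noteq> 0" using la lb assms(2) by auto
  have le: "mdeg ?L \<le> 1"
  proof (rule mdeg_le)
    fix \<alpha> assume "\<alpha> \<in> Poly_Mapping.keys ?L"
    then have "\<alpha> \<in> Poly_Mapping.keys (Poly_Mapping.single (Poly_Mapping.single i 1) a) \<union> Poly_Mapping.keys (Poly_Mapping.single (Poly_Mapping.single j (1::nat)) b)"
      unfolding L by (rule keys_add[THEN subsetD])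
    then show "tdeg \<alpha> \<le> 1" by (auto split: if_splits)
  qed
  have l0: "Poly_Mapping.lookup ?L 0 = 0"
  proof -
    have "(0::nat \<Rightarrow>\<^sub>0 nat) \<noteq> Poly_Mapping.single i 1" "(0::nat \<Rightarrow>\<^sub>0 nat) \<noteq> Poly_Mapping.single j 1"
      by (metis lookup_single_eq lookup_zero zero_neq_one)+
    then show ?thesis by (simp add: L lookup_add lookup_single when_def)
  qed
  have "mdeg ?L \<noteq> 0"
  proof
    assume "mdeg ?L = 0"
    then have "?L = mp_const 0" using mdeg0_const l0 by metis
    then show False using nz by simp
  qed
  then show "mdeg ?L = 1" using le by simp
qed

lemma lprime_ell:
  fixes s t :: "'b::field"
  assumes "s \<noteq> 0 \<or> t \<noteq> 0"
  shows "lprime (mp_const t * mp_var 0 - mp_const s * mp_var 1)"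
proof (cases "t = 0")
  case False
  have "mp_const t * mp_var 0 - mp_const s * mp_var 1 = mp_const t * (mp_var 0 - mp_const (s / t) * mp_var 1)"
    using False by (simp add: algebra_simps flip: mp_const_mult)
  moreover have "lprime (mp_const t * (mp_var 0 - mp_const (s / t) * mp_var (1::nat)))"
    by (rule lprime_unit_mult[OF lin_lprime False]) simp
  ultimately show ?thesis by simp
next
  case True
  then have s: "s \<noteq> 0" using assms by simp
  have "mp_const t * mp_var 0 - mp_const s * mp_var 1 = mp_const (- s) * (mp_var 1 - mp_const 0 * mp_var (0::nat))"
    using True by (simp add: mp_const_uminus)
  moreover have "lprime (mp_const (- s) * (mp_var 1 - mp_const 0 * mp_var (0::nat)))"
    by (rule lprime_unit_mult[OF lin_lprime]) (use s in simp_all)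
  ultimately show ?thesis by simp
qed

lemma dvd_unit_const:
  fixes L Y :: "'b::field mpoly"
  assumes "u \<noteq> 0" "L dvd mp_const u * Y"
  shows "L dvd Y"
proof -
  have "Y = mp_const (inverse u) * (mp_const u * Y)"
    using assms(1) by (simp add: mult.assoc[symmetric] flip: mp_const_mult)
  then show ?thesis using assms(2) by (metis dvd_mult)
qed

lemma mult_divisible:
  fixes Gt R :: "'b::field mpoly"
  assumes Gnz: "Gt \<noteq> 0" and d0: "Gt dvd R * mp_pderiv 0 Gt" and d1: "Gt dvd R * mp_pderiv 1 Gt"
    and st: "s \<noteq> 0 \<or> t \<noteq> 0" and nR: "\<not> (mp_const t * mp_var 0 - mp_const s * mp_var 1) dvd R"
  shows "of_nat (binform_mult Gt s t) = (0::'b)"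
proof -
  define L where "L = mp_const t * mp_var 0 - mp_const s * mp_var (1::nat)"
  have Leq: "L = mp_const t * mp_var 0 + mp_const (-s) * mp_var 1" by (simp add: L_def mp_const_uminus)
  have Lnz: "L \<noteq> 0" and Ldeg: "mdeg L = 1" using lin2[of 0 1 t "-s"] st unfolding Leq by auto
  have Lp: "lprime L" using lprime_ell[OF st] unfolding L_def .
  have bound: "m \<le> mdeg Gt" if Lm: "L ^ m dvd Gt" for m
  proof -
    obtain C where C: "Gt = L ^ m * C" using Lm by (auto simp: dvd_def)
    then have "C \<noteq> 0" using Gnz by auto
    then have "mdeg Gt = m + mdeg C" using C Lnz by (simp add: mdeg_mult mdeg_power Ldeg)
    then show ?thesis by simp
  qed
  define M where "M = binform_mult Gt s t"
  have M: "M = (GREATEST m. L ^ m dvd Gt)" by (simp add: M_def binform_mult_def L_def)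
  have LM: "L ^ M dvd Gt" unfolding M by (rule GreatestI_nat[where k=0 and b="mdeg Gt"]) (auto intro: bound)
  have LM1: "\<not> L ^ Suc M dvd Gt"
  proof
    assume "L ^ Suc M dvd Gt"
    then have "Suc M \<le> M" unfolding M by (rule Greatest_le_nat[where b="mdeg Gt"]) (auto intro: bound)
    then show False by simp
  qed
  show "of_nat M = (0::'b)"
  proof (rule ccontr)
    assume nM: "of_nat M \<noteq> (0::'b)"
    then obtain M' where MM: "M = Suc M'" by (cases M) auto
    obtain K0 where GK: "Gt = L ^ M * K0" using LM by (auto simp: dvd_def)
    have key: "L dvd R * K0" if j: "mp_pderiv j L = mp_const c" "c \<noteq> 0" "Gt dvd R * mp_pderiv j Gt" for j c
    proof -
      have dG: "mp_pderiv j Gt = L ^ M' * (mp_const (of_nat M * c) * K0) + L ^ M * mp_pderiv j K0"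
      proof -
        have dpow: "mp_pderiv j (L ^ M) = of_nat M * L ^ M' * mp_const c"
          unfolding MM j(1)[symmetric] by (rule mp_pderiv_power)
        have cM: "of_nat M * L ^ M' * mp_const c = L ^ M' * mp_const (of_nat M * c)"
          by (simp add: mp_const_mult mp_const_of_nat algebra_simps)
        have "mp_pderiv j Gt = mp_pderiv j (L ^ M) * K0 + L ^ M * mp_pderiv j K0"
          unfolding GK by (rule mp_pderiv_mult)
        also have "\<dots> = L ^ M' * mp_const (of_nat M * c) * K0 + L ^ M * mp_pderiv j K0"
          by (simp only: dpow cM)
        finally show ?thesis by (simp add: mult.assoc)
      qed
      have "L ^ M dvd R * mp_pderiv j Gt" using LM j(3) by (rule dvd_trans)
      then have "L ^ M dvd R * (L ^ M' * (mp_const (of_nat M * c) * K0)) + L ^ M * (R * mp_pderiv j K0)"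
        by (simp add: dG algebra_simps)
      then have "L ^ M dvd R * (L ^ M' * (mp_const (of_nat M * c) * K0))"
        by (simp add: dvd_add_left_iff)
      then have "L ^ M' * L dvd L ^ M' * (mp_const (of_nat M * c) * (R * K0))"
        by (simp add: MM algebra_simps)
      then have "L dvd mp_const (of_nat M * c) * (R * K0)"
        using Lnz by simp
      then show ?thesis by (rule dvd_unit_const[rotated]) (use nM j(2) in simp)
    qed
    have "L dvd R * K0"
    proof (cases "t = 0")
      case False
      show ?thesis
        by (rule key[of 0 t]) (use False d0 in \<open>simp_all add: L_def mp_pderiv_diff mp_pderiv_const_mult mp_pderiv_var\<close>)
    next
      case True
      then have "s \<noteq> 0" using st by simp
      then show ?thesis
        by (intro key[of 1 "- s"]) (use d1 in \<open>simp_all add: L_def mp_pderiv_diff mp_pderiv_const_mult mp_pderiv_var mp_const_uminus\<close>)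
    qed
    then have "L dvd K0" using Lp nR unfolding lprime_def L_def by blast
    then obtain K1 where "K0 = L * K1" by (auto simp: dvd_def)
    then have "Gt = L ^ Suc M * K1" using GK by (simp add: algebra_simps)
    then show False using LM1 by simp
  qed
qed

lemma mp_map_diff:
  assumes "g 0 = 0" "\<And>a b. g (a - b) = g a - g b"
  shows "mp_map g (A - B) = mp_map g A - mp_map g (B::'a::ab_group_add mpoly)"
  by (rule poly_mapping_eqI) (simp add: lookup_mp_map assms lookup_minus)

lemma mp_map_ac_add: "mp_map to_ac (A + B) = mp_map to_ac A + mp_map to_ac B"
  by (rule mp_map_add) simp_all
lemma mp_map_ac_diff: "mp_map to_ac (A - B) = mp_map to_ac A - mp_map to_ac B"
  by (rule mp_map_diff) simp_all
lemma mp_map_ac_mult: "mp_map to_ac (A * B) = mp_map to_ac A * mp_map to_ac B"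
  by (rule mp_map_mult) simp_all
lemma mp_map_ac_one: "mp_map to_ac 1 = 1"
  by (metis mp_map_single single_one to_ac_0 to_ac_1)
lemma mp_map_ac_power: "mp_map to_ac (A ^ n) = mp_map to_ac A ^ n"
  by (induction n) (simp_all add: mp_map_ac_one mp_map_ac_mult)
lemma mp_map_ac_var: "mp_map to_ac (mp_var i) = mp_var i"
  by (simp add: mp_var_def' mp_map_single)
lemma mp_map_ac_const: "mp_map to_ac (mp_const c) = mp_const (to_ac c)"
  by (simp add: mp_const_def' mp_map_single)
lemma mp_map_ac_pderiv: "mp_map to_ac (mp_pderiv i A) = mp_pderiv i (mp_map to_ac A)"
  by (rule mp_map_pderiv) simp_all
lemma mp_map_ac_Rq: "mp_map to_ac (Rq q) = Rq q"
  by (simp add: Rq_def mp_map_ac_diff mp_map_ac_mult mp_map_ac_power mp_map_ac_var)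
lemma mp_map_ac_dvd: "A dvd B \<Longrightarrow> mp_map to_ac A dvd mp_map to_ac B"
  by (auto simp: dvd_def mp_map_ac_mult)
lemma mp_map_ac_nz: "A \<noteq> 0 \<Longrightarrow> mp_map to_ac A \<noteq> 0"
  by (metis lookup_mp_map lookup_zero poly_mapping_eqI to_ac_0 to_ac_eq_0_iff)

lemma mp_eval_map_ac: "mp_eval (mp_map to_ac A) (\<lambda>i. to_ac (x i)) = to_ac (mp_eval A x)"
  by (rule linear_eq[where \<Phi>="\<lambda>A. mp_eval (mp_map to_ac A) (\<lambda>i. to_ac (x i))" and \<Psi>="\<lambda>A. to_ac (mp_eval A x)"])
     (simp_all add: mp_map_ac_add mp_eval_add mp_map_single mon_def to_ac_prod)



lemma lookup_pderiv_at:
  fixes A :: "'a::comm_ring_1 mpoly"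
  assumes nz: "Poly_Mapping.lookup \<alpha> i \<noteq> 0"
  shows "Poly_Mapping.lookup (mp_pderiv i A) (\<alpha> - Poly_Mapping.single i 1) = of_nat (Poly_Mapping.lookup \<alpha> i) * Poly_Mapping.lookup A \<alpha>"
proof -
  let ?e = "Poly_Mapping.single i (1::nat)"
  have bk: "?e + (\<beta> - ?e) = \<beta>" if "Poly_Mapping.lookup \<beta> i \<noteq> 0" for \<beta>
    by (rule poly_mapping_eqI) (use that in \<open>auto simp: lookup_add lookup_minus lookup_single when_def\<close>)
  have "Poly_Mapping.lookup (mp_pderiv i A) (\<alpha> - ?e)
      = (\<Sum>\<beta>\<in>Poly_Mapping.keys A. (of_nat (Poly_Mapping.lookup \<beta> i) * Poly_Mapping.lookup A \<beta> when \<beta> - ?e = \<alpha> - ?e))"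
    by (simp add: mp_pderiv_def mp_monom_def lookup_sum lookup_single)
  also have "\<dots> = (\<Sum>\<beta>\<in>Poly_Mapping.keys A. if \<beta> = \<alpha> then of_nat (Poly_Mapping.lookup \<alpha> i) * Poly_Mapping.lookup A \<alpha> else 0)"
  proof (rule sum.cong[OF refl])
    fix \<beta>
    show "(of_nat (Poly_Mapping.lookup \<beta> i) * Poly_Mapping.lookup A \<beta> when \<beta> - ?e = \<alpha> - ?e)
        = (if \<beta> = \<alpha> then of_nat (Poly_Mapping.lookup \<alpha> i) * Poly_Mapping.lookup A \<alpha> else 0)"
    proof (cases "\<beta> = \<alpha>")
      case False
      show ?thesis
      proof (cases "Poly_Mapping.lookup \<beta> i = 0")
        case False
        have "\<beta> - ?e \<noteq> \<alpha> - ?e"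
        proof
          assume "\<beta> - ?e = \<alpha> - ?e"
          then have "?e + (\<beta> - ?e) = ?e + (\<alpha> - ?e)" by simp
          then show False using bk[OF False] bk[OF nz] \<open>\<beta> \<noteq> \<alpha>\<close> by simp
        qed
        then show ?thesis using \<open>\<beta> \<noteq> \<alpha>\<close> by simp
      qed (use \<open>\<beta> \<noteq> \<alpha>\<close> in simp)
    qed simp
  qed
  also have "\<dots> = of_nat (Poly_Mapping.lookup \<alpha> i) * Poly_Mapping.lookup A \<alpha>"
    by (simp add: in_keys_iff)
  finally show ?thesis .
qed

lemma exps_div_char:
  fixes G :: "'a::idom mpoly"
  assumes "\<And>i. mp_pderiv i G = 0" "\<alpha> \<in> Poly_Mapping.keys G"
  shows "CHAR('a) dvd Poly_Mapping.lookup \<alpha> i"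
proof (cases "Poly_Mapping.lookup \<alpha> i = 0")
  case False
  have "of_nat (Poly_Mapping.lookup \<alpha> i) * Poly_Mapping.lookup G \<alpha> = (0::'a)"
    using lookup_pderiv_at[OF False, of G] assms(1) by simp
  then have "of_nat (Poly_Mapping.lookup \<alpha> i) = (0::'a)" using assms(2) by (simp add: in_keys_iff)
  then show ?thesis by (simp add: of_nat_eq_0_iff_char_dvd)
qed simp

lemma CHAR_mpoly: "CHAR('a::comm_ring_1 mpoly) = CHAR('a)"
proof (rule CHAR_eqI)
  show "of_nat CHAR('a) = (0::'a mpoly)" by (simp flip: mp_const_of_nat)
  show "CHAR('a) dvd n" if "of_nat n = (0::'a mpoly)" for n
    using that by (simp add: of_nat_eq_0_iff_char_dvd flip: mp_const_of_nat)
qed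

lemma pow_single: "(Poly_Mapping.single \<beta> (c::'a::comm_ring_1)) ^ k = Poly_Mapping.single (\<Sum>j<k. \<beta>) (c ^ k)"
  by (induction k) (simp_all add: mult_single add.commute)

lemma pth_power_construct:
  fixes G :: "'a::{finite,field} mpoly"
  assumes "\<And>\<alpha> i. \<alpha> \<in> Poly_Mapping.keys G \<Longrightarrow> CHAR('a) dvd Poly_Mapping.lookup \<alpha> i"
  shows "\<exists>H. G = H ^ CHAR('a)"
proof -
  let ?p = "CHAR('a)"
  define dv where "dv \<alpha> = Poly_Mapping.map (\<lambda>n. n div ?p) \<alpha>" for \<alpha> :: "nat \<Rightarrow>\<^sub>0 nat"
  define rt where "rt c = (SOME r. r ^ ?p = c)" for c :: 'a
  have rt: "rt c ^ ?p = c" for c unfolding rt_def by (rule someI_ex) (rule pth_root_surj)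
  have dv: "(\<Sum>j<?p. dv \<alpha>) = \<alpha>" if "\<alpha> \<in> Poly_Mapping.keys G" for \<alpha>
  proof (rule poly_mapping_eqI)
    fix i
    have "Poly_Mapping.lookup (\<Sum>j<?p. dv \<alpha>) i = ?p * (Poly_Mapping.lookup \<alpha> i div ?p)"
      by (simp only: lookup_sum) (simp add: dv_def lookup_map0)
    also have "\<dots> = Poly_Mapping.lookup \<alpha> i" using assms[OF that, of i] by simp
    finally show "Poly_Mapping.lookup (\<Sum>j<?p. dv \<alpha>) i = Poly_Mapping.lookup \<alpha> i" .
  qed
  define H where "H = (\<Sum>\<alpha>\<in>Poly_Mapping.keys G. Poly_Mapping.single (dv \<alpha>) (rt (Poly_Mapping.lookup G \<alpha>)))"
  have pr: "prime CHAR('a mpoly)" by (simp add: CHAR_mpoly CHAR_ff_prime)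
  have "H ^ ?p = (\<Sum>\<alpha>\<in>Poly_Mapping.keys G. Poly_Mapping.single (dv \<alpha>) (rt (Poly_Mapping.lookup G \<alpha>)) ^ ?p)"
    unfolding H_def by (rule freshmans_dream_sum[OF pr]) (simp add: CHAR_mpoly)
  also have "\<dots> = (\<Sum>\<alpha>\<in>Poly_Mapping.keys G. Poly_Mapping.single \<alpha> (Poly_Mapping.lookup G \<alpha>))"
    by (rule sum.cong[OF refl]) (simp add: pow_single dv rt del: sum_constant)
  also have "\<dots> = G" by (rule pm_expand[symmetric])
  finally show ?thesis by metis
qed



declare One_nat_def [simp del]

lemma mp_subst_prod: "mp_subst (prod f S) l = (\<Prod>s\<in>S. mp_subst (f s) l)"
  by (induction S rule: infinite_finite_induct) (auto simp: mp_subst_mult)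

lemma mp_var_nz [simp]: "mp_var i \<noteq> (0::'a::comm_ring_1 mpoly)"
  by (metis mp_var_def' lookup_single_eq lookup_zero one_neq_zero)

abbreviation ell :: "'a::comm_ring_1 \<Rightarrow> 'a mpoly" where
  "ell c \<equiv> mp_var 1 - mp_const c * mp_var 0"

lemma ell_lin2: "ell c = mp_const 1 * mp_var 1 + mp_const (- c) * mp_var 0"
  by (simp add: mp_const_uminus)

lemma ell_nz: "ell (c::'a::field) \<noteq> 0"
  by (subst ell_lin2, rule lin2) simp_all
lemma ell_deg: "mdeg (ell (c::'a::field)) = 1"
  by (subst ell_lin2, rule lin2) simp_all

lemma peel_prod:
  fixes A :: "'a::field mpoly"
  assumes "finite S" "\<And>c. c \<in> S \<Longrightarrow> mp_subst A (lsub 1 0 c) = 0"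
  shows "(\<Prod>c\<in>S. ell c) dvd A"
  using assms
proof (induction S rule: finite_induct)
  case empty then show ?case by simp
next
  case (insert c S)
  then obtain B where B: "A = (\<Prod>c\<in>S. ell c) * B" by (auto simp: dvd_def)
  have sub_ell: "mp_subst (ell c') (lsub 1 0 c) = mp_const (c - c') * mp_var 0" for c'
    by (simp add: lsub_def mp_subst_diff mp_subst_mult mp_const_diff algebra_simps)
  have each: "mp_subst (ell c') (lsub 1 0 c) \<noteq> 0" if "c' \<in> S" for c'
  proof -
    have "c - c' \<noteq> 0" using that insert(2) by auto
    then have "mp_const (c - c') * mp_var 0 \<noteq> (0::'a mpoly)" by simp
    then show ?thesis using sub_ell[of c'] by metis
  qed
  have "mp_subst (\<Prod>c\<in>S. ell c) (lsub 1 0 c) = (\<Prod>c'\<in>S. mp_subst (ell c') (lsub 1 0 c))"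
    by (rule mp_subst_prod)
  also have "\<dots> \<noteq> 0" using each insert(1) by (simp add: prod_zero_iff)
  finally have "mp_subst (\<Prod>c\<in>S. ell c) (lsub 1 0 c) \<noteq> 0" .
  moreover have "mp_subst A (lsub 1 0 c) = 0" using insert by simp
  ultimately have "mp_subst B (lsub 1 0 c) = 0" by (simp add: B mp_subst_mult)
  then have "ell c dvd B" by (subst lin_dvd_iff) simp_all
  then obtain B' where "B = ell c * B'" by (auto simp: dvd_def)
  then have "A = (\<Prod>c\<in>insert c S. ell c) * B'" using B insert(1,2) by (simp add: ac_simps)
  then show ?case by simp
qed

lemma peel_G:
  fixes G :: "'a::field mpoly"
  assumes "finite S" "\<And>c. c \<in> S \<Longrightarrow> \<not> ell c dvd G" "G dvd (\<Prod>c\<in>S. ell c) * Y"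
  shows "G dvd Y"
  using assms
proof (induction S arbitrary: Y rule: finite_induct)
  case empty then show ?case by simp
next
  case (insert c S)
  have eq: "(\<Prod>c\<in>insert c S. ell c) * Y = ell c * ((\<Prod>c\<in>S. ell c) * Y)"
    using insert(1,2) by (simp add: mult.assoc)
  have "G dvd ell c * ((\<Prod>c\<in>S. ell c) * Y)" using insert(5) unfolding eq .
  moreover have "\<not> ell c dvd G" using insert(4) by simp
  ultimately have "G dvd (\<Prod>c\<in>S. ell c) * Y"
    using lprime_cancel[OF lin_lprime ell_nz] by (metis zero_neq_one)
  then show ?case using insert by blast
qed

lemma tdeg_one [simp]: "tdeg (1::nat \<Rightarrow>\<^sub>0 nat) = 1"
  by (metis single_one tdeg_single)

lemma const_pow_card: "mp_const (c::'a::{finite,field}) ^ CARD('a) = mp_const c"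
  by (simp add: ff_power_card flip: mp_const_power)

lemma Rq_expl: "Rq q = Poly_Mapping.single (Poly_Mapping.single 0 1 + Poly_Mapping.single 1 q) (1::'a::comm_ring_1)
   - Poly_Mapping.single (Poly_Mapping.single 0 q + Poly_Mapping.single 1 1) 1"
  by (simp only: Rq_def var_power) (simp add: mp_var_def' mult_single)

lemma Rq_nz: "2 \<le> q \<Longrightarrow> Rq q \<noteq> (0::'a::comm_ring_1 mpoly)"
proof
  assume q: "2 \<le> q" and R: "Rq q = (0::'a mpoly)"
  let ?m1 = "Poly_Mapping.single 0 1 + Poly_Mapping.single 1 q :: nat \<Rightarrow>\<^sub>0 nat"
  let ?m2 = "Poly_Mapping.single 0 q + Poly_Mapping.single 1 1 :: nat \<Rightarrow>\<^sub>0 nat"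
  have "Poly_Mapping.lookup ?m1 0 \<noteq> Poly_Mapping.lookup ?m2 0" using q by (simp add: lookup_add lookup_single)
  then have ne: "?m2 \<noteq> ?m1" by metis
  have "Poly_Mapping.lookup (Rq q :: 'a mpoly) ?m1 = 1"
    using ne by (simp add: Rq_expl lookup_minus lookup_single_not_eq)
  then show False using R by simp
qed

lemma Rq_deg: "mdeg (Rq q :: 'a::comm_ring_1 mpoly) \<le> q + 1"
proof (rule mdeg_le)
  fix \<alpha> assume "\<alpha> \<in> Poly_Mapping.keys (Rq q :: 'a mpoly)"
  then have "\<alpha> \<in> Poly_Mapping.keys (Poly_Mapping.single (Poly_Mapping.single 0 1 + Poly_Mapping.single 1 q) (1::'a))
     \<union> Poly_Mapping.keys (Poly_Mapping.single (Poly_Mapping.single 0 q + Poly_Mapping.single 1 (1::nat)) (1::'a))"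
    unfolding Rq_expl by (rule keys_diff[THEN subsetD])
  then show "tdeg \<alpha> \<le> q + 1" by (auto simp: tdeg_add split: if_splits)
qed

lemma Rq_factor:
  "\<exists>u0. u0 \<noteq> 0 \<and> Rq CARD('a) = mp_var 0 * ((\<Prod>c\<in>(UNIV::'a::{finite,field} set). ell c) * mp_const u0)"
proof -
  let ?q = "CARD('a)"
  let ?P = "(\<Prod>c\<in>(UNIV::'a set). ell c)"
  have q2: "2 \<le> ?q" by (rule card_ge2)
  have "?P dvd Rq ?q"
  proof (rule peel_prod)
    fix c :: 'a
    have "mp_subst (Rq ?q) (lsub 1 0 c) = mp_var 0 * (mp_const c * mp_var 0) ^ ?q - mp_var 0 ^ ?q * (mp_const c * mp_var 0)"
      by (simp add: Rq_def lsub_def mp_subst_diff mp_subst_mult mp_subst_power)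
    also have "\<dots> = mp_var 0 * (mp_const c * mp_var 0 ^ ?q) - mp_var 0 ^ ?q * (mp_const c * mp_var 0)"
      by (simp only: power_mult_distrib const_pow_card)
    also have "\<dots> = 0" by (simp add: algebra_simps)
    finally show "mp_subst (Rq ?q) (lsub 1 0 c) = 0" .
  qed simp
  then obtain B where B: "Rq ?q = ?P * B" by (auto simp: dvd_def)
  have s0R: "mp_subst (Rq ?q) (lsub 0 1 (0::'a)) = 0"
    using q2 by (simp add: Rq_def lsub_def mp_subst_diff mp_subst_mult mp_subst_power)
  have s0P: "mp_subst ?P (lsub 0 1 (0::'a)) \<noteq> 0"
    by (simp add: mp_subst_prod lsub_def mp_subst_diff mp_subst_mult prod_zero_iff)
  have "mp_subst B (lsub 0 1 (0::'a)) = 0" using s0R s0P by (simp add: B mp_subst_mult)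
  then have "(mp_var 0 - mp_const 0 * mp_var 1) dvd B" by (subst lin_dvd_iff) simp_all
  then obtain u where u: "B = mp_var 0 * u" by (auto simp: dvd_def)
  have R: "Rq ?q = mp_var 0 * (?P * u)" using B u by (simp add: algebra_simps)
  have Rnz: "Rq ?q \<noteq> (0::'a mpoly)" using Rq_nz q2 by blast
  then have unz: "u \<noteq> 0" and Pnz: "?P \<noteq> 0" using R by auto
  have "mdeg ?P = (\<Sum>c\<in>(UNIV::'a set). mdeg (ell c))" by (rule mdeg_prod) (rule ell_nz)
  then have "mdeg ?P = ?q" by (simp add: ell_deg)
  then have "mdeg (Rq ?q :: 'a mpoly) = 1 + ?q + mdeg u" using R unz Pnz by (simp add: mdeg_mult)
  then have "mdeg u = 0" using Rq_deg[of ?q, where 'a='a] by simp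
  then have "u = mp_const (Poly_Mapping.lookup u 0)" by (rule mdeg0_const)
  then show ?thesis using R unz by (metis mp_const_0)
qed

lemma dvd_deriv_zero:
  fixes G :: "'a::field mpoly"
  assumes "G \<noteq> 0" "G dvd mp_pderiv i G"
  shows "mp_pderiv i G = 0"
proof (rule ccontr)
  assume nz: "mp_pderiv i G \<noteq> 0"
  obtain C where C: "mp_pderiv i G = G * C" using assms(2) by (auto simp: dvd_def)
  then have "C \<noteq> 0" using nz by auto
  then have "mdeg (mp_pderiv i G) = mdeg G + mdeg C" using C assms(1) by (simp add: mdeg_mult)
  then show False using mdeg_pderiv_less[OF nz] by simp
qed

lemma claim1:
  fixes F :: "'a::{finite,field} mpoly" and P Q :: "nat \<Rightarrow> 'a"
  assumes form: "is_form n d F" and nc: "frobenius_nonclassical n CARD('a) F"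
    and Gnz: "restrict_line F P Q \<noteq> 0"
    and nopt: "\<And>s t. s \<noteq> 0 \<or> t \<noteq> 0 \<Longrightarrow> mp_eval F (\<lambda>i. s * P i + t * Q i) \<noteq> 0"
  shows "\<exists>H. restrict_line F P Q = H ^ CHAR('a)"
proof -
  define G where "G = restrict_line F P Q"
  have evG: "mp_eval (mp_subst G \<sigma>) (\<lambda>_. 1) = mp_eval F (\<lambda>i. mp_eval (\<sigma> 0) (\<lambda>_. 1) * P i + mp_eval (\<sigma> 1) (\<lambda>_. 1) * Q i)"
    for \<sigma> by (simp add: mp_eval_subst G_def eval_restrict)
  have nell: "\<not> ell c dvd G" for c :: 'a
  proof
    assume "ell c dvd G"
    then have "mp_subst G (lsub 1 0 c) = 0" by (subst (asm) lin_dvd_iff) simp_all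
    then have "mp_eval F (\<lambda>i. 1 * P i + c * Q i) = 0" using evG[of "lsub 1 0 c"] by (simp add: lsub_def mp_eval_mult)
    then show False using nopt[of 1 c] by simp
  qed
  have nx0: "\<not> (mp_var 0 - mp_const 0 * mp_var 1) dvd G"
  proof
    assume "(mp_var 0 - mp_const 0 * mp_var 1) dvd G"
    then have "mp_subst G (lsub 0 1 (0::'a)) = 0" by (subst (asm) lin_dvd_iff) simp_all
    then have "mp_eval F (\<lambda>i. 0 * P i + 1 * Q i) = 0" using evG[of "lsub 0 1 0"] by (simp add: lsub_def mp_eval_mult)
    then show False using nopt[of 0 1] by simp
  qed
  obtain u0 where u0: "u0 \<noteq> 0" "Rq CARD('a) = mp_var 0 * ((\<Prod>c\<in>(UNIV::'a set). ell c) * mp_const u0)"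
    using Rq_factor by blast
  have G0: "G \<noteq> 0" using Gnz G_def by simp
  have dz: "mp_pderiv j G = 0" if "G dvd Rq CARD('a) * mp_pderiv j G" for j
  proof -
    have "G dvd (mp_var 0 - mp_const 0 * mp_var 1) * ((\<Prod>c\<in>(UNIV::'a set). ell c) * (mp_const u0 * mp_pderiv j G))"
      using that u0(2) by (simp add: ac_simps)
    then have "G dvd (\<Prod>c\<in>(UNIV::'a set). ell c) * (mp_const u0 * mp_pderiv j G)"
    proof -
      have lp0: "lprime (mp_var 0 - mp_const 0 * mp_var 1 :: 'a mpoly)" by (rule lin_lprime) simp
      have nz0: "(mp_var 0 - mp_const 0 * mp_var 1 :: 'a mpoly) \<noteq> 0" by simp
      show ?thesis by (rule lprime_cancel[OF lp0 nz0 nx0]) fact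
    qed
    then have "G dvd mp_const u0 * mp_pderiv j G"
      by (rule peel_G[rotated 2]) (simp_all add: nell)
    then have "G dvd mp_pderiv j G" by (rule dvd_unit_const[OF u0(1)])
    then show ?thesis by (rule dvd_deriv_zero[OF G0])
  qed
  have all: "mp_pderiv j G = 0" for j
  proof -
    have ids: "G dvd Rq CARD('a) * mp_pderiv 1 G" "G dvd Rq CARD('a) * mp_pderiv 0 G"
      "\<And>j. j \<noteq> 0 \<Longrightarrow> j \<noteq> 1 \<Longrightarrow> mp_pderiv j G = 0"
      using restr_key_identities[OF form nc, where P=P and Q=Q] unfolding G_def by blast+
    show ?thesis using ids dz by (cases "j = 0"; cases "j = 1") auto
  qed
  have "\<exists>H. G = H ^ CHAR('a)"
    by (rule pth_power_construct) (rule exps_div_char[OF all])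
  then show ?thesis by (simp add: G_def)
qed



theorem lemma2p2:
  fixes F :: "'a::{finite,field} mpoly"
    and n d q p :: nat
    and P Q :: "nat \<Rightarrow> 'a"
  assumes q_def: "q = CARD('a)"
    and p_def: "p = CHAR('a)"
    and form: "is_form n d F" and F_nz: "F \<noteq> 0" and d_pos: "0 < d"
    and nonclassical: "frobenius_nonclassical n q F"
    and line: "\<forall>a b. (\<forall>i\<le>n. a * P i + b * Q i = 0) \<longrightarrow> a = 0 \<and> b = 0"
    and not_contained: "restrict_line F P Q \<noteq> 0"
    and not_pth_power: "\<not> (\<exists>H. restrict_line F P Q = H ^ p)"
  shows "(\<exists>s t :: 'a. (s \<noteq> 0 \<or> t \<noteq> 0) \<and> mp_eval F (\<lambda>i. s * P i + t * Q i) = 0)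
       \<and> (\<forall>s t :: 'a alg_closure.
            (s \<noteq> 0 \<or> t \<noteq> 0)
            \<and> mp_eval (mp_map to_ac F) (\<lambda>i. s * to_ac (P i) + t * to_ac (Q i)) = 0
            \<and> \<not> (\<exists>(c :: 'a alg_closure) (a :: nat \<Rightarrow> 'a). c \<noteq> 0 \<and>
                   (\<forall>i\<le>n. s * to_ac (P i) + t * to_ac (Q i) = c * to_ac (a i)))
            \<longrightarrow> p dvd int_mult F P Q s t)"
proof (intro conjI allI impI)
  have nc: "frobenius_nonclassical n CARD('a) F" using nonclassical q_def by simp
  show "\<exists>s t :: 'a. (s \<noteq> 0 \<or> t \<noteq> 0) \<and> mp_eval F (\<lambda>i. s * P i + t * Q i) = 0"
  proof (rule ccontr)
    assume "\<not> (\<exists>s t :: 'a. (s \<noteq> 0 \<or> t \<noteq> 0) \<and> mp_eval F (\<lambda>i. s * P i + t * Q i) = 0)"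
    then have "\<And>s t. s \<noteq> 0 \<or> t \<noteq> 0 \<Longrightarrow> mp_eval F (\<lambda>i. s * P i + t * Q i) \<noteq> 0" by blast
    then obtain H where "restrict_line F P Q = H ^ CHAR('a)"
      using claim1[OF form nc not_contained] by blast
    then show False using not_pth_power p_def by blast
  qed
next
  fix s t :: "'a alg_closure"
  assume asm: "(s \<noteq> 0 \<or> t \<noteq> 0)
            \<and> mp_eval (mp_map to_ac F) (\<lambda>i. s * to_ac (P i) + t * to_ac (Q i)) = 0
            \<and> \<not> (\<exists>(c :: 'a alg_closure) (a :: nat \<Rightarrow> 'a). c \<noteq> 0 \<and>
                   (\<forall>i\<le>n. s * to_ac (P i) + t * to_ac (Q i) = c * to_ac (a i)))"
  then have st: "s \<noteq> 0 \<or> t \<noteq> 0"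
    and nrat: "\<not> (\<exists>(c :: 'a alg_closure) (a :: nat \<Rightarrow> 'a). c \<noteq> 0 \<and>
                   (\<forall>i\<le>n. s * to_ac (P i) + t * to_ac (Q i) = c * to_ac (a i)))" by blast+
  have nc: "frobenius_nonclassical n CARD('a) F" using nonclassical q_def by simp
  define Gt where "Gt = mp_map to_ac (restrict_line F P Q)"
  have Gnz: "Gt \<noteq> 0" unfolding Gt_def by (rule mp_map_ac_nz[OF not_contained])
  have ids: "restrict_line F P Q dvd Rq CARD('a) * mp_pderiv 1 (restrict_line F P Q)"
     "restrict_line F P Q dvd Rq CARD('a) * mp_pderiv 0 (restrict_line F P Q)"
    using restr_key_identities[OF form nc, where P=P and Q=Q] by blast+
  have d1: "Gt dvd Rq CARD('a) * mp_pderiv 1 Gt"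
    using mp_map_ac_dvd[OF ids(1)] by (simp add: Gt_def mp_map_ac_mult mp_map_ac_Rq mp_map_ac_pderiv)
  have d0: "Gt dvd Rq CARD('a) * mp_pderiv 0 Gt"
    using mp_map_ac_dvd[OF ids(2)] by (simp add: Gt_def mp_map_ac_mult mp_map_ac_Rq mp_map_ac_pderiv)
  have nR: "\<not> (mp_const t * mp_var 0 - mp_const s * mp_var 1) dvd Rq CARD('a)"
  proof
    assume "(mp_const t * mp_var 0 - mp_const s * mp_var 1) dvd Rq CARD('a)"
    then obtain C where C: "Rq CARD('a) = (mp_const t * mp_var 0 - mp_const s * mp_var 1) * C"
      by (auto simp: dvd_def)
    define y where "y = (\<lambda>k::nat. if k = 0 then s else t)"
    have "mp_eval (Rq CARD('a)) y = (t * s - s * t) * mp_eval C y"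
      unfolding C by (simp add: mp_eval_mult mp_eval_diff y_def)
    then have "mp_eval (Rq CARD('a)) y = 0" by (simp add: mult.commute)
    then have E: "s * t ^ CARD('a) = s ^ CARD('a) * t"
      by (simp add: Rq_def mp_eval_diff mp_eval_mult mp_eval_power y_def)
    show False
    proof (cases "s = 0")
      case True
      then have "\<exists>(c :: 'a alg_closure) (a :: nat \<Rightarrow> 'a). c \<noteq> 0 \<and>
                   (\<forall>i\<le>n. s * to_ac (P i) + t * to_ac (Q i) = c * to_ac (a i))"
        using st by (intro exI[of _ t] exI[of _ Q]) simp
      then show False using nrat by blast
    next
      case False
      define u where "u = t / s"
      have "u ^ CARD('a) = u"
        using E False by (simp add: u_def power_divide field_simps)
      then obtain a0 where a0: "u = to_ac a0" using ac_fixed_in_range by blast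
      then have t: "t = s * to_ac a0" using False by (simp add: u_def field_simps)
      have "\<exists>(c :: 'a alg_closure) (a :: nat \<Rightarrow> 'a). c \<noteq> 0 \<and>
                   (\<forall>i\<le>n. s * to_ac (P i) + t * to_ac (Q i) = c * to_ac (a i))"
        using False by (intro exI[of _ s] exI[of _ "\<lambda>i. P i + a0 * Q i"]) (simp add: t algebra_simps)
      then show False using nrat by blast
    qed
  qed
  have "of_nat (binform_mult Gt s t) = (0 :: 'a alg_closure)"
    by (rule mult_divisible[OF Gnz d0 d1 st nR])
  then have "CHAR('a alg_closure) dvd binform_mult Gt s t"
    by (simp only: of_nat_eq_0_iff_char_dvd)
  then show "p dvd int_mult F P Q s t" by (simp add: int_mult_def Gt_def p_def)
qed

end
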